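(* Let $\theta^{\mu\nu}=-\theta^{\nu\mu}$ be constant with $\theta^{0i}=0$, let $J^\mu$ be a prescribed smooth external current (not assumed conserved), and set $C:=\partial_\mu J^\mu$. Consider the Lagrangian $\mathcal L=\mathcal L_{\rm ws}+\mathcal L_J$ with $$\mathcal L_{\rm ws}=-\tfrac14F_{\mu\nu}F^{\mu\nu}+\tfrac18\theta^{\alpha\beta}F_{\alpha\beta}F_{\mu\nu}F^{\mu\nu}-\tfrac12\theta^{\alpha\beta}F_{\mu\alpha}F_{\nu\beta}F^{\mu\nu},$$ $$\mathcal L_J=-A_\mu J^\mu-\theta^{\mu\alpha}J^\beta A_\mu\partial_\alpha A_\beta+\tfrac12\theta^{\mu\alpha}J^\beta A_\mu\partial_\beta A_\alpha,$$ and let $\mathcal E_B^\nu:=\frac{\partial\mathcal L}{\partial A_\nu}-\partial_\mu\frac{\partial\mathcal L}{\partial(\partial_\mu A_\nu)}$ be its Euler--Lagrange expression. Let $\dot\phi_2:=\{\phi_2,H_c\}+\partial_t\phi_2\big|_{\rm expl}$, where $\phi_2$ is the secondary constraint, $H_c$ the canonical Hamiltonian, and $\partial_t\phi_2|_{\rm expl}=-\partial_0J^0+\tfrac12\theta^{kl}\partial_l(A_k\partial_0J^0)$ is the derivative with respect to the explicit time dependence carried by $J^\mu$. Then, to first order in $\theta$ (i.e. modulo $O(\theta^2)$), and after expressing the Lagrangian quantities in the canonical variables, one has the identity $$\partial_\nu\mathcal E_B^\nu=\dot\phi_2=\Phi_3^{\rm cand},$$ where $$\Phi_3^{\rm cand}:=-\partial_\mu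 J^\mu+\theta^{li}(\partial_iJ^0)\partial_lA_0+\theta^{li}\partial_i\bigl(J^k\partial_lA_k\bigr)-\tfrac12\theta^{il}\partial_i\bigl[A_l(\partial_\mu J^\mu)\bigr].$$ In particular all terms containing the momenta $\pi^k$ cancel in $\dot\phi_2$.
   Context: Minkowski space with metric $\eta^{\mu\nu}=\mathrm{diag}(+1,-1,-1,-1)$; Greek indices run over $0,1,2,3$, Latin indices over $1,2,3$; repeated indices are summed; $\partial_0=\partial_t$. $A_\mu$ is a smooth $U(1)$ gauge potential, $F_{\mu\nu}=\partial_\mu A_\nu-\partial_\nu A_\mu$. Canonical phase space: fields $A_\mu(x),\pi^\mu(x)$ at fixed time with $\{A_\mu(x),\pi^\nu(y)\}=\delta^\nu_\mu\delta^3(x-y)$ and all other basic brackets zero; for functionals, $\{F,G\}=\int d^3z\,\bigl[\frac{\delta F}{\delta A_k(z)}\frac{\delta G}{\delta\pi^k(z)}-\frac{\delta F}{\delta\pi^k(z)}\frac{\delta G}{\delta A_k(z)}\bigr]$ (plus the analogous $A_0,\pi^0$ terms). Spatial momenta: $\pi^i=\bigl[\tfrac12F_{kl}\theta^{kl}-1\bigr]F^{0i}+F^{0j}F_{jk}\theta^{ki}+F^{0m}F_{kj}\eta_{lm}\eta^{ji}\theta^{lk}+\tfrac12\theta^{ji}A_jJ^0$, and $\pi^0\approx0$ is the primary constraint $\phi_1$. Secondary constraint: $\phi_2=\partial_i\pi^i-J^0+\tfrac12\theta^{kl}\partial_l(A_kJ^0)$. Canonical Hamiltonian $H_c=\int d^3x(\mathcal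 H_{\rm ws}+\mathcal H_J)$ with $\mathcal H_{\rm ws}=\pi_i\partial^iA_0+\tfrac14F_{ij}F^{ij}[1-\tfrac12F_{ml}\theta^{ml}]-\tfrac12\eta_{00}\eta_{ij}\pi^i\pi^j[1+\tfrac12F_{ml}\theta^{ml}]+\tfrac12F^{ip}F_{li}F_{pm}\theta^{ml}-F_{li}\eta_{00}\eta_{mj}\pi^i\pi^j\theta^{ml}$ and $\mathcal H_J=A_0J^0+A_jJ^j+\tfrac12\theta^{jl}[A_jJ^0\partial_lA_0+A_jJ^k\partial_lA_k+A_jJ^0\eta_{00}\eta_{li}\pi^i-A_jF_{kl}J^k]$. *)

theory Defs
  imports "HOL-Analysis.Analysis" "HOL-Library.Numeral_Type" "HOL-Library.Landau_Symbols"
begin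

text \<open>Spacetime points are vectors in real^4; indices are elements of the
  numeral type 4 = {0,1,2,3}; index 0 is time, the spatial indices are 1,2,3.\<close>

definition spat :: "4 set" where "spat = UNIV - {0}"

definition eta :: "4 \<Rightarrow> 4 \<Rightarrow> real" where
  "eta \<mu> \<nu> = (if \<mu> \<noteq> \<nu> then 0 else if \<mu> = 0 then 1 else -1)"

definition pdx :: "4 \<Rightarrow> (real^4 \<Rightarrow> real) \<Rightarrow> real^4 \<Rightarrow> real" where
  "pdx \<mu> f x = deriv (\<lambda>s. f (x + s *\<^sub>R axis \<mu> 1)) 0"

fun iterpd :: "4 list \<Rightarrow> (real^4 \<Rightarrow> real) \<Rightarrow> real^4 \<Rightarrow> real" where
  "iterpd [] f = f"
| "iterpd (\<mu> # ks) f = pdx \<mu> (iterpd ks f)"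

definition smooth4 :: "(real^4 \<Rightarrow> real) \<Rightarrow> bool" where
  "smooth4 f \<longleftrightarrow> (\<forall>ks x. iterpd ks f differentiable (at x))"

definition pdj :: "(('v \<Rightarrow> real) \<Rightarrow> real) \<Rightarrow> ('v \<Rightarrow> real) \<Rightarrow> 'v \<Rightarrow> real" where
  "pdj g p i = deriv (\<lambda>s. g (p(i := s))) (p i)"

definition scale_theta :: "real \<Rightarrow> (4 \<Rightarrow> 4 \<Rightarrow> real) \<Rightarrow> 4 \<Rightarrow> 4 \<Rightarrow> real" where
  "scale_theta \<epsilon> \<Theta> = (\<lambda>\<mu> \<nu>. \<epsilon> * \<Theta> \<mu> \<nu>)"

text \<open>Lagrangian jet variables: LA mu = A_mu, LdA mu nu = d_mu A_nu.\<close>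
datatype lvar = LA "4" | LdA "4" "4"

definition Fl :: "(lvar \<Rightarrow> real) \<Rightarrow> 4 \<Rightarrow> 4 \<Rightarrow> real" where
  "Fl p \<mu> \<nu> = p (LdA \<mu> \<nu>) - p (LdA \<nu> \<mu>)"

definition Flup :: "(lvar \<Rightarrow> real) \<Rightarrow> 4 \<Rightarrow> 4 \<Rightarrow> real" where
  "Flup p \<mu> \<nu> = (\<Sum>\<alpha>\<in>UNIV. \<Sum>\<beta>\<in>UNIV. eta \<mu> \<alpha> * eta \<nu> \<beta> * Fl p \<alpha> \<beta>)"

definition Lws :: "(4 \<Rightarrow> 4 \<Rightarrow> real) \<Rightarrow> (lvar \<Rightarrow> real) \<Rightarrow> real" where
  "Lws \<theta> p =
     - (1/4) * (\<Sum>\<mu>\<in>UNIV. \<Sum>\<nu>\<in>UNIV. Fl p \<mu> \<nu> * Flup p \<mu> \<nu>)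
     + (1/8) * (\<Sum>\<alpha>\<in>UNIV. \<Sum>\<beta>\<in>UNIV. \<theta> \<alpha> \<beta> * Fl p \<alpha> \<beta>)
             * (\<Sum>\<mu>\<in>UNIV. \<Sum>\<nu>\<in>UNIV. Fl p \<mu> \<nu> * Flup p \<mu> \<nu>)
     - (1/2) * (\<Sum>\<alpha>\<in>UNIV. \<Sum>\<beta>\<in>UNIV. \<Sum>\<mu>\<in>UNIV. \<Sum>\<nu>\<in>UNIV.
                 \<theta> \<alpha> \<beta> * Fl p \<mu> \<alpha> * Fl p \<nu> \<beta> * Flup p \<mu> \<nu>)"

text \<open>Jx mu = J^mu at the point under consideration.\<close>
definition LJ :: "(4 \<Rightarrow> 4 \<Rightarrow> real) \<Rightarrow> (4 \<Rightarrow> real) \<Rightarrow> (lvar \<Rightarrow> real) \<Rightarrow> real" where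
  "LJ \<theta> Jx p =
     - (\<Sum>\<mu>\<in>UNIV. p (LA \<mu>) * Jx \<mu>)
     - (\<Sum>\<mu>\<in>UNIV. \<Sum>\<alpha>\<in>UNIV. \<Sum>\<beta>\<in>UNIV. \<theta> \<mu> \<alpha> * Jx \<beta> * p (LA \<mu>) * p (LdA \<alpha> \<beta>))
     + (1/2) * (\<Sum>\<mu>\<in>UNIV. \<Sum>\<alpha>\<in>UNIV. \<Sum>\<beta>\<in>UNIV. \<theta> \<mu> \<alpha> * Jx \<beta> * p (LA \<mu>) * p (LdA \<beta> \<alpha>))"

definition Lag :: "(4 \<Rightarrow> 4 \<Rightarrow> real) \<Rightarrow> (4 \<Rightarrow> real^4 \<Rightarrow> real) \<Rightarrow> real^4 \<Rightarrow> (lvar \<Rightarrow> real) \<Rightarrow> real" where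
  "Lag \<theta> J x p = Lws \<theta> p + LJ \<theta> (\<lambda>\<mu>. J \<mu> x) p"

definition ljet :: "(4 \<Rightarrow> real^4 \<Rightarrow> real) \<Rightarrow> real^4 \<Rightarrow> lvar \<Rightarrow> real" where
  "ljet A x v = (case v of LA \<mu> \<Rightarrow> A \<mu> x | LdA \<mu> \<nu> \<Rightarrow> pdx \<mu> (A \<nu>) x)"

definition EB :: "(4 \<Rightarrow> 4 \<Rightarrow> real) \<Rightarrow> (4 \<Rightarrow> real^4 \<Rightarrow> real) \<Rightarrow> (4 \<Rightarrow> real^4 \<Rightarrow> real) \<Rightarrow> 4 \<Rightarrow> real^4 \<Rightarrow> real" where
  "EB \<theta> A J \<nu> x = pdj (Lag \<theta> J x) (ljet A x) (LA \<nu>)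
     - (\<Sum>\<mu>\<in>UNIV. pdx \<mu> (\<lambda>y. pdj (Lag \<theta> J y) (ljet A y) (LdA \<mu> \<nu>)) x)"

definition divEB :: "(4 \<Rightarrow> 4 \<Rightarrow> real) \<Rightarrow> (4 \<Rightarrow> real^4 \<Rightarrow> real) \<Rightarrow> (4 \<Rightarrow> real^4 \<Rightarrow> real) \<Rightarrow> real^4 \<Rightarrow> real" where
  "divEB \<theta> A J x = (\<Sum>\<nu>\<in>UNIV. pdx \<nu> (EB \<theta> A J \<nu>) x)"

text \<open>Canonical jet variables: CA mu = A_mu, CdA j mu = d_j A_mu, CP mu = pi^mu,
  CdP j mu = d_j pi^mu (only spatial j are used).\<close>
datatype cvar = CA "4" | CdA "4" "4" | CP "4" | CdP "4" "4"

definition Fc :: "(cvar \<Rightarrow> real) \<Rightarrow> 4 \<Rightarrow> 4 \<Rightarrow> real" where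
  "Fc q k l = q (CdA k l) - q (CdA l k)"

definition Fcup :: "(cvar \<Rightarrow> real) \<Rightarrow> 4 \<Rightarrow> 4 \<Rightarrow> real" where
  "Fcup q k l = (\<Sum>a\<in>spat. \<Sum>b\<in>spat. eta k a * eta l b * Fc q a b)"

definition Hws :: "(4 \<Rightarrow> 4 \<Rightarrow> real) \<Rightarrow> (cvar \<Rightarrow> real) \<Rightarrow> real" where
  "Hws \<theta> q =
     (\<Sum>i\<in>spat. (\<Sum>j\<in>spat. eta i j * q (CP j)) * (\<Sum>j\<in>spat. eta i j * q (CdA j 0)))
   + (1/4) * (\<Sum>i\<in>spat. \<Sum>j\<in>spat. Fc q i j * Fcup q i j)
       * (1 - (1/2) * (\<Sum>m\<in>spat. \<Sum>l\<in>spat. Fc q m l * \<theta> m l))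
   - (1/2) * eta 0 0 * (\<Sum>i\<in>spat. \<Sum>j\<in>spat. eta i j * q (CP i) * q (CP j))
       * (1 + (1/2) * (\<Sum>m\<in>spat. \<Sum>l\<in>spat. Fc q m l * \<theta> m l))
   + (1/2) * (\<Sum>i\<in>spat. \<Sum>p\<in>spat. \<Sum>l\<in>spat. \<Sum>m\<in>spat.
                Fcup q i p * Fc q l i * Fc q p m * \<theta> m l)
   - (\<Sum>l\<in>spat. \<Sum>i\<in>spat. \<Sum>m\<in>spat. \<Sum>j\<in>spat.
        Fc q l i * eta 0 0 * eta m j * q (CP i) * q (CP j) * \<theta> m l)"

definition HJ :: "(4 \<Rightarrow> 4 \<Rightarrow> real) \<Rightarrow> (4 \<Rightarrow> real) \<Rightarrow> (cvar \<Rightarrow> real) \<Rightarrow> real" where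
  "HJ \<theta> Jx q =
     q (CA 0) * Jx 0 + (\<Sum>j\<in>spat. q (CA j) * Jx j)
   + (1/2) * (\<Sum>j\<in>spat. \<Sum>l\<in>spat. \<theta> j l *
        ( q (CA j) * Jx 0 * q (CdA l 0)
        + (\<Sum>k\<in>spat. q (CA j) * Jx k * q (CdA l k))
        + q (CA j) * Jx 0 * eta 0 0 * (\<Sum>i\<in>spat. eta l i * q (CP i))
        - (\<Sum>k\<in>spat. q (CA j) * Fc q k l * Jx k)))"

definition Ham :: "(4 \<Rightarrow> 4 \<Rightarrow> real) \<Rightarrow> (4 \<Rightarrow> real^4 \<Rightarrow> real) \<Rightarrow> real^4 \<Rightarrow> (cvar \<Rightarrow> real) \<Rightarrow> real" where
  "Ham \<theta> J x q = Hws \<theta> q + HJ \<theta> (\<lambda>\<mu>. J \<mu> x) q"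

definition phi2 :: "(4 \<Rightarrow> 4 \<Rightarrow> real) \<Rightarrow> (4 \<Rightarrow> real^4 \<Rightarrow> real) \<Rightarrow> real^4 \<Rightarrow> (cvar \<Rightarrow> real) \<Rightarrow> real" where
  "phi2 \<theta> J x q = (\<Sum>i\<in>spat. q (CdP i i)) - J 0 x
     + (1/2) * (\<Sum>k\<in>spat. \<Sum>l\<in>spat. \<theta> k l *
          (q (CdA l k) * J 0 x + q (CA k) * pdx l (J 0) x))"

definition Ff :: "(4 \<Rightarrow> real^4 \<Rightarrow> real) \<Rightarrow> 4 \<Rightarrow> 4 \<Rightarrow> real^4 \<Rightarrow> real" where
  "Ff A \<mu> \<nu> x = pdx \<mu> (A \<nu>) x - pdx \<nu> (A \<mu>) x"

definition Ffup :: "(4 \<Rightarrow> real^4 \<Rightarrow> real) \<Rightarrow> 4 \<Rightarrow> 4 \<Rightarrow> real^4 \<Rightarrow> real" where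
  "Ffup A \<mu> \<nu> x = (\<Sum>\<alpha>\<in>UNIV. \<Sum>\<beta>\<in>UNIV. eta \<mu> \<alpha> * eta \<nu> \<beta> * Ff A \<alpha> \<beta> x)"

text \<open>pi^0 = 0 (primary constraint); spatial pi^i given by the stated formula.\<close>
definition piF :: "(4 \<Rightarrow> 4 \<Rightarrow> real) \<Rightarrow> (4 \<Rightarrow> real^4 \<Rightarrow> real) \<Rightarrow> (4 \<Rightarrow> real^4 \<Rightarrow> real) \<Rightarrow> 4 \<Rightarrow> real^4 \<Rightarrow> real" where
  "piF \<theta> A J i x = (if i = 0 then 0 else
      ((1/2) * (\<Sum>k\<in>spat. \<Sum>l\<in>spat. Ff A k l x * \<theta> k l) - 1) * Ffup A 0 i x
    + (\<Sum>j\<in>spat. \<Sum>k\<in>spat. Ffup A 0 j x * Ff A j k x * \<theta> k i)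
    + (\<Sum>m\<in>spat. \<Sum>k\<in>spat. \<Sum>j\<in>spat. \<Sum>l\<in>spat.
         Ffup A 0 m x * Ff A k j x * eta l m * eta j i * \<theta> l k)
    + (1/2) * (\<Sum>j\<in>spat. \<theta> j i * A j x * J 0 x))"

definition cjet :: "(4 \<Rightarrow> 4 \<Rightarrow> real) \<Rightarrow> (4 \<Rightarrow> real^4 \<Rightarrow> real) \<Rightarrow> (4 \<Rightarrow> real^4 \<Rightarrow> real) \<Rightarrow> real^4 \<Rightarrow> cvar \<Rightarrow> real" where
  "cjet \<theta> A J x v = (case v of
      CA \<mu> \<Rightarrow> A \<mu> x
    | CdA j \<mu> \<Rightarrow> pdx j (A \<mu>) x
    | CP \<mu> \<Rightarrow> piF \<theta> A J \<mu> x
    | CdP j \<mu> \<Rightarrow> pdx j (piF \<theta> A J \<mu>) x)"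

text \<open>Variational derivatives of H_c = integral of Ham over space.\<close>
definition dHdA :: "(4 \<Rightarrow> 4 \<Rightarrow> real) \<Rightarrow> (4 \<Rightarrow> real^4 \<Rightarrow> real) \<Rightarrow> (4 \<Rightarrow> real^4 \<Rightarrow> real) \<Rightarrow> 4 \<Rightarrow> real^4 \<Rightarrow> real" where
  "dHdA \<theta> A J \<mu> x = pdj (Ham \<theta> J x) (cjet \<theta> A J x) (CA \<mu>)
     - (\<Sum>j\<in>spat. pdx j (\<lambda>y. pdj (Ham \<theta> J y) (cjet \<theta> A J y) (CdA j \<mu>)) x)"

definition dHdP :: "(4 \<Rightarrow> 4 \<Rightarrow> real) \<Rightarrow> (4 \<Rightarrow> real^4 \<Rightarrow> real) \<Rightarrow> (4 \<Rightarrow> real^4 \<Rightarrow> real) \<Rightarrow> 4 \<Rightarrow> real^4 \<Rightarrow> real" where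
  "dHdP \<theta> A J \<mu> x = pdj (Ham \<theta> J x) (cjet \<theta> A J x) (CP \<mu>)
     - (\<Sum>j\<in>spat. pdx j (\<lambda>y. pdj (Ham \<theta> J y) (cjet \<theta> A J y) (CdP j \<mu>)) x)"

definition PB_phi2_H :: "(4 \<Rightarrow> 4 \<Rightarrow> real) \<Rightarrow> (4 \<Rightarrow> real^4 \<Rightarrow> real) \<Rightarrow> (4 \<Rightarrow> real^4 \<Rightarrow> real) \<Rightarrow> real^4 \<Rightarrow> real" where
  "PB_phi2_H \<theta> A J x = (\<Sum>\<mu>\<in>UNIV.
       pdj (phi2 \<theta> J x) (cjet \<theta> A J x) (CA \<mu>) * dHdP \<theta> A J \<mu> x
     + (\<Sum>j\<in>spat. pdj (phi2 \<theta> J x) (cjet \<theta> A J x) (CdA j \<mu>) * pdx j (dHdP \<theta> A J \<mu>) x)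
     - pdj (phi2 \<theta> J x) (cjet \<theta> A J x) (CP \<mu>) * dHdA \<theta> A J \<mu> x
     - (\<Sum>j\<in>spat. pdj (phi2 \<theta> J x) (cjet \<theta> A J x) (CdP j \<mu>) * pdx j (dHdA \<theta> A J \<mu>) x))"

definition phi2_expl :: "(4 \<Rightarrow> 4 \<Rightarrow> real) \<Rightarrow> (4 \<Rightarrow> real^4 \<Rightarrow> real) \<Rightarrow> (4 \<Rightarrow> real^4 \<Rightarrow> real) \<Rightarrow> real^4 \<Rightarrow> real" where
  "phi2_expl \<theta> A J x = - pdx 0 (J 0) x
     + (1/2) * (\<Sum>k\<in>spat. \<Sum>l\<in>spat. \<theta> k l * pdx l (\<lambda>y. A k y * pdx 0 (J 0) y) x)"

definition phi2_dot :: "(4 \<Rightarrow> 4 \<Rightarrow> real) \<Rightarrow> (4 \<Rightarrow> real^4 \<Rightarrow> real) \<Rightarrow> (4 \<Rightarrow> real^4 \<Rightarrow> real) \<Rightarrow> real^4 \<Rightarrow> real" where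
  "phi2_dot \<theta> A J x = PB_phi2_H \<theta> A J x + phi2_expl \<theta> A J x"

definition divJ :: "(4 \<Rightarrow> real^4 \<Rightarrow> real) \<Rightarrow> real^4 \<Rightarrow> real" where
  "divJ J y = (\<Sum>\<mu>\<in>UNIV. pdx \<mu> (J \<mu>) y)"

definition Phi3cand :: "(4 \<Rightarrow> 4 \<Rightarrow> real) \<Rightarrow> (4 \<Rightarrow> real^4 \<Rightarrow> real) \<Rightarrow> (4 \<Rightarrow> real^4 \<Rightarrow> real) \<Rightarrow> real^4 \<Rightarrow> real" where
  "Phi3cand \<theta> A J x = - divJ J x
     + (\<Sum>l\<in>spat. \<Sum>i\<in>spat. \<theta> l i * pdx i (J 0) x * pdx l (A 0) x)
     + (\<Sum>l\<in>spat. \<Sum>i\<in>spat. \<theta> l i * pdx i (\<lambda>y. \<Sum>k\<in>spat. J k y * pdx l (A k) y) x)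
     - (1/2) * (\<Sum>i\<in>spat. \<Sum>l\<in>spat. \<theta> i l * pdx i (\<lambda>y. A l y * divJ J y) x)"

end

theory Submission
  imports Defs
begin

lemma four_eq0: "(4::4) = 0" by simp
lemma UNIV4: "(UNIV::4 set) = {0,1,2,3}"
  using UNIV_4 four_eq0 by auto
lemma sum_UNIV4: "(\<Sum>i\<in>UNIV. f i) = f (0::4) + f 1 + f 2 + f 3"
  by (subst UNIV4) (simp add: add.assoc)
lemma spat_eq: "spat = {1,2,3}"
  unfolding spat_def by (subst UNIV4) auto
lemma sum_spat: "(\<Sum>i\<in>spat. f i) = f (1::4) + f 2 + f 3"
  by (simp add: spat_eq add.assoc)

lemma pdx_hasderiv:
  assumes "(f has_derivative f') (at x)"
  shows "pdx \<mu> f x = f' (axis \<mu> 1)"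
proof -
  have h1: "((\<lambda>s::real. x + s *\<^sub>R axis \<mu> 1) has_derivative (\<lambda>s. s *\<^sub>R axis \<mu> 1)) (at 0)"
    by (auto intro!: derivative_eq_intros)
  have h2: "(f has_derivative f') (at (x + (0::real) *\<^sub>R axis \<mu> 1))" using assms by simp
  have h3: "((\<lambda>s. f (x + s *\<^sub>R axis \<mu> 1)) has_derivative (\<lambda>s. f' (s *\<^sub>R axis \<mu> 1))) (at 0)"
    using has_derivative_compose[OF h1 h2] by (simp add: o_def)
  have lin: "linear f'" using assms has_derivative_linear by blast
  have "(\<lambda>s. f' (s *\<^sub>R axis \<mu> 1)) = (\<lambda>s. f' (axis \<mu> 1) * s)"
    using linear_scale[OF lin] by (auto simp: mult.commute)
  with h3 have "((\<lambda>s. f (x + s *\<^sub>R axis \<mu> 1)) has_real_derivative f' (axis \<mu> 1)) (at 0)"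
    by (simp add: has_field_derivative_def)
  then show ?thesis unfolding pdx_def by (rule DERIV_imp_deriv)
qed

definition D4 :: "(real^4 \<Rightarrow> real) \<Rightarrow> bool" where
  "D4 f \<longleftrightarrow> (\<forall>x. f differentiable (at x))"

lemma pdx_add:
  assumes "f differentiable (at x)" "g differentiable (at x)"
  shows "pdx \<mu> (\<lambda>y. f y + g y) x = pdx \<mu> f x + pdx \<mu> g x"
proof -
  obtain f' g' where f': "(f has_derivative f') (at x)" and g': "(g has_derivative g') (at x)"
    using assms unfolding differentiable_def by blast
  have "((\<lambda>y. f y + g y) has_derivative (\<lambda>h. f' h + g' h)) (at x)"
    using f' g' by (rule has_derivative_add)
  from pdx_hasderiv[OF this] show ?thesis using pdx_hasderiv[OF f'] pdx_hasderiv[OF g'] by simp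
qed

lemma pdx_mult:
  assumes "f differentiable (at x)" "g differentiable (at x)"
  shows "pdx \<mu> (\<lambda>y. f y * g y) x = pdx \<mu> f x * g x + f x * pdx \<mu> g x"
proof -
  obtain f' g' where f': "(f has_derivative f') (at x)" and g': "(g has_derivative g') (at x)"
    using assms unfolding differentiable_def by blast
  have "((\<lambda>y. f y * g y) has_derivative (\<lambda>h. f x * g' h + f' h * g x)) (at x)"
    using f' g' by (rule has_derivative_mult)
  from pdx_hasderiv[OF this] show ?thesis using pdx_hasderiv[OF f'] pdx_hasderiv[OF g'] by simp
qed

lemma pdx_const: "pdx \<mu> (\<lambda>y. c) x = 0"
  using pdx_hasderiv[OF has_derivative_const] by simp

lemma pdx_sum:
  assumes "finite I" "\<And>i. i \<in> I \<Longrightarrow> f i differentiable (at x)"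
  shows "pdx \<mu> (\<lambda>y. \<Sum>i\<in>I. f i y) x = (\<Sum>i\<in>I. pdx \<mu> (f i) x)"
proof -
  have "\<forall>i\<in>I. \<exists>f'. (f i has_derivative f') (at x)" using assms(2) unfolding differentiable_def by blast
  then obtain F where F: "\<And>i. i \<in> I \<Longrightarrow> (f i has_derivative F i) (at x)" by metis
  have "((\<lambda>y. \<Sum>i\<in>I. f i y) has_derivative (\<lambda>h. \<Sum>i\<in>I. F i h)) (at x)"
    using F by (rule has_derivative_sum)
  from pdx_hasderiv[OF this] show ?thesis using pdx_hasderiv[OF F] by simp
qed

lemma iterpd_snoc: "iterpd (ks @ [\<mu>]) f = iterpd ks (pdx \<mu> f)"
  by (induction ks) auto

lemma iterpd_add:
  assumes "\<forall>ks'. length ks' < length ks \<longrightarrow> D4 (iterpd ks' f) \<and> D4 (iterpd ks' g)"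
  shows "iterpd ks (\<lambda>y. f y + g y) = (\<lambda>y. iterpd ks f y + iterpd ks g y)"
  using assms
proof (induction ks)
  case Nil then show ?case by simp
next
  case (Cons \<mu> ks)
  have IH: "iterpd ks (\<lambda>y. f y + g y) = (\<lambda>y. iterpd ks f y + iterpd ks g y)"
    using Cons by auto
  have df: "D4 (iterpd ks f)" and dg: "D4 (iterpd ks g)" using Cons.prems by auto
  show ?case
  proof
    fix y
    have "iterpd (\<mu> # ks) (\<lambda>y. f y + g y) y = pdx \<mu> (\<lambda>y. iterpd ks f y + iterpd ks g y) y"
      using IH by simp
    also have "\<dots> = pdx \<mu> (iterpd ks f) y + pdx \<mu> (iterpd ks g) y"
      using df dg unfolding D4_def by (intro pdx_add) auto
    finally show "iterpd (\<mu> # ks) (\<lambda>y. f y + g y) y = iterpd (\<mu> # ks) f y + iterpd (\<mu> # ks) g y" by simp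
  qed
qed

lemma smooth4_D4: "smooth4 f \<Longrightarrow> D4 (iterpd ks f)"
  unfolding smooth4_def D4_def by blast

lemma smooth4_diff: "smooth4 f \<Longrightarrow> f differentiable (at x)"
  unfolding smooth4_def by (metis iterpd.simps(1))

lemma smooth4_pdx: "smooth4 f \<Longrightarrow> smooth4 (pdx \<mu> f)"
  unfolding smooth4_def by (metis iterpd_snoc)

lemma smooth4_add: "smooth4 f \<Longrightarrow> smooth4 g \<Longrightarrow> smooth4 (\<lambda>y. f y + g y)"
proof -
  assume sf: "smooth4 f" and sg: "smooth4 g"
  show ?thesis unfolding smooth4_def
  proof (intro allI)
    fix ks x
    have "iterpd ks (\<lambda>y. f y + g y) = (\<lambda>y. iterpd ks f y + iterpd ks g y)"
      by (rule iterpd_add) (use sf sg smooth4_D4 in blast)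
    moreover have "iterpd ks f differentiable at x" "iterpd ks g differentiable at x"
      using sf sg unfolding smooth4_def by blast+
    ultimately show "iterpd ks (\<lambda>y. f y + g y) differentiable at x"
      by (simp add: differentiable_add)
  qed
qed

lemma iterpd_const: "iterpd ks (\<lambda>y. c) = (\<lambda>y. if ks = [] then c else 0)"
proof (induction ks)
  case Nil then show ?case by simp
next
  case (Cons a ks) then show ?case by (auto simp: pdx_const)
qed

lemma smooth4_const: "smooth4 (\<lambda>y. c)"
  unfolding smooth4_def iterpd_const by auto

lemma smooth4_mult_aux:
  fixes ks :: "4 list"
  shows "length ks = n \<Longrightarrow> smooth4 f \<Longrightarrow> smooth4 g \<Longrightarrow> D4 (iterpd ks (\<lambda>y. f y * g y))"
proof (induction n arbitrary: ks f g rule: less_induct)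
  case (less n)
  note sf = less.prems(2) and sg = less.prems(3)
  show ?case
  proof (cases ks rule: rev_exhaust)
    case Nil
    have "(\<lambda>y. f y * g y) differentiable at x" for x
      using smooth4_diff[OF sf] smooth4_diff[OF sg] by (rule differentiable_mult)
    then show ?thesis using Nil unfolding D4_def by simp
  next
    case (snoc ks' \<mu>)
    have lt: "length ks' < n" using less.prems(1) snoc by simp
    have pm: "pdx \<mu> (\<lambda>y. f y * g y) = (\<lambda>y. pdx \<mu> f y * g y + f y * pdx \<mu> g y)"
      using smooth4_diff[OF sf] smooth4_diff[OF sg] pdx_mult by blast
    have s1: "smooth4 (pdx \<mu> f)" "smooth4 (pdx \<mu> g)" using sf sg smooth4_pdx by auto
    have IH: "D4 (iterpd k (\<lambda>y. pdx \<mu> f y * g y))" "D4 (iterpd k (\<lambda>y. f y * pdx \<mu> g y))"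
      if "length k \<le> length ks'" for k :: "4 list"
      using less.IH[OF _ refl, of k] that lt s1 sf sg by simp_all
    have "iterpd ks' (\<lambda>y. pdx \<mu> f y * g y + f y * pdx \<mu> g y)
          = (\<lambda>y. iterpd ks' (\<lambda>y. pdx \<mu> f y * g y) y + iterpd ks' (\<lambda>y. f y * pdx \<mu> g y) y)"
      by (rule iterpd_add) (use IH in simp)
    moreover note IH[OF order_refl]
    ultimately show ?thesis unfolding snoc iterpd_snoc pm D4_def
      by (simp add: differentiable_add)
  qed
qed

lemma smooth4_mult: assumes "smooth4 f" "smooth4 g" shows "smooth4 (\<lambda>y. f y * g y)"
proof -
  { fix ks :: "4 list" have "D4 (iterpd ks (\<lambda>y. f y * g y))" using smooth4_mult_aux[OF refl] assms by blast }
  then show ?thesis unfolding smooth4_def D4_def by blast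
qed

lemma smooth4_sum: "finite I \<Longrightarrow> (\<And>i. i \<in> I \<Longrightarrow> smooth4 (f i)) \<Longrightarrow> smooth4 (\<lambda>y. \<Sum>i\<in>I. f i y)"
  by (induction I rule: finite_induct) (auto simp: smooth4_const intro!: smooth4_add)

lemma smooth4_cmult: "smooth4 f \<Longrightarrow> smooth4 (\<lambda>y. c * f y)"
  using smooth4_mult[OF smooth4_const] by blast

lemma smooth4_minus: "smooth4 f \<Longrightarrow> smooth4 (\<lambda>y. - f y)"
  using smooth4_cmult[of f "-1"] by simp

lemma smooth4_diff_fun: "smooth4 f \<Longrightarrow> smooth4 g \<Longrightarrow> smooth4 (\<lambda>y. f y - g y)"
  using smooth4_add[OF _ smooth4_minus] by (simp add: algebra_simps)




lemma pdx_line_deriv: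
  assumes "\<And>w. f differentiable (at w)"
  shows "((\<lambda>s. f (z + s *\<^sub>R axis \<mu> 1)) has_real_derivative pdx \<mu> f (z + t *\<^sub>R axis \<mu> 1)) (at t)"
proof -
  obtain f' where f': "(f has_derivative f') (at (z + t *\<^sub>R axis \<mu> 1))"
    using assms unfolding differentiable_def by blast
  have h1: "((\<lambda>s::real. z + s *\<^sub>R axis \<mu> 1) has_derivative (\<lambda>s. s *\<^sub>R axis \<mu> 1)) (at t)"
    by (auto intro!: derivative_eq_intros)
  have h3: "((\<lambda>s. f (z + s *\<^sub>R axis \<mu> 1)) has_derivative (\<lambda>s. f' (s *\<^sub>R axis \<mu> 1))) (at t)"
    using has_derivative_compose[OF h1 f'] by (simp add: o_def)
  have lin: "linear f'" using f' has_derivative_linear by blast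
  have "(\<lambda>s. f' (s *\<^sub>R axis \<mu> 1)) = (\<lambda>s. f' (axis \<mu> 1) * s)"
    using linear_scale[OF lin] by (auto simp: mult.commute)
  with h3 have "((\<lambda>s. f (z + s *\<^sub>R axis \<mu> 1)) has_real_derivative f' (axis \<mu> 1)) (at t)"
    by (simp add: has_field_derivative_def)
  then show ?thesis using pdx_hasderiv[OF f'] by simp
qed

lemma smooth4_D: "smooth4 f \<Longrightarrow> (\<And>w. f differentiable (at w))"
  by (rule smooth4_diff)

lemma mixed_mvt:
  assumes sf: "smooth4 f" and h: "0 < h"
  shows "\<exists>\<xi> \<eta>. 0 < \<xi> \<and> \<xi> < h \<and> 0 < \<eta> \<and> \<eta> < h \<and>
     f (x + h *\<^sub>R axis \<nu> 1 + h *\<^sub>R axis \<mu> 1) - f (x + h *\<^sub>R axis \<nu> 1) - f (x + h *\<^sub>R axis \<mu> 1) + f x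
       = h * h * pdx \<mu> (pdx \<nu> f) (x + \<xi> *\<^sub>R axis \<nu> 1 + \<eta> *\<^sub>R axis \<mu> 1)"
proof -
  let ?e1 = "axis \<nu> (1::real) :: real^4" and ?e2 = "axis \<mu> (1::real) :: real^4"
  define \<phi> where "\<phi> s = f ((x + h *\<^sub>R ?e2) + s *\<^sub>R ?e1) - f (x + s *\<^sub>R ?e1)" for s
  have d\<phi>: "DERIV \<phi> s :> pdx \<nu> f ((x + h *\<^sub>R ?e2) + s *\<^sub>R ?e1) - pdx \<nu> f (x + s *\<^sub>R ?e1)" for s
    unfolding \<phi>_def
    by (intro DERIV_diff pdx_line_deriv smooth4_diff[OF sf])
  obtain \<xi> where \<xi>: "0 < \<xi>" "\<xi> < h" and e1: "\<phi> h - \<phi> 0 = (h - 0) *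
      (pdx \<nu> f ((x + h *\<^sub>R ?e2) + \<xi> *\<^sub>R ?e1) - pdx \<nu> f (x + \<xi> *\<^sub>R ?e1))"
    using MVT2[OF h d\<phi>] by blast
  have sf1: "smooth4 (pdx \<nu> f)" using sf by (rule smooth4_pdx)
  define \<psi> where "\<psi> t = pdx \<nu> f ((x + \<xi> *\<^sub>R ?e1) + t *\<^sub>R ?e2)" for t
  have d\<psi>: "DERIV \<psi> t :> pdx \<mu> (pdx \<nu> f) ((x + \<xi> *\<^sub>R ?e1) + t *\<^sub>R ?e2)" for t
    unfolding \<psi>_def by (intro pdx_line_deriv smooth4_diff[OF sf1])
  obtain \<eta> where \<eta>: "0 < \<eta>" "\<eta> < h" and e2: "\<psi> h - \<psi> 0 = (h - 0) *
      pdx \<mu> (pdx \<nu> f) ((x + \<xi> *\<^sub>R ?e1) + \<eta> *\<^sub>R ?e2)"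
    using MVT2[OF h d\<psi>] by blast
  have "\<psi> h - \<psi> 0 = pdx \<nu> f ((x + h *\<^sub>R ?e2) + \<xi> *\<^sub>R ?e1) - pdx \<nu> f (x + \<xi> *\<^sub>R ?e1)"
    unfolding \<psi>_def by (simp add: algebra_simps)
  then have "\<phi> h - \<phi> 0 = h * h * pdx \<mu> (pdx \<nu> f) ((x + \<xi> *\<^sub>R ?e1) + \<eta> *\<^sub>R ?e2)"
    using e1 e2 by simp
  moreover have "\<phi> h - \<phi> 0 = f (x + h *\<^sub>R ?e1 + h *\<^sub>R ?e2) - f (x + h *\<^sub>R ?e1) - f (x + h *\<^sub>R ?e2) + f x"
    unfolding \<phi>_def by (simp add: algebra_simps)
  ultimately show ?thesis using \<xi> \<eta> by (metis (no_types, lifting))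
qed

lemma clairaut:
  assumes sf: "smooth4 f"
  shows "pdx \<mu> (pdx \<nu> f) x = pdx \<nu> (pdx \<mu> f) x"
proof (rule ccontr)
  let ?a = "pdx \<mu> (pdx \<nu> f)" and ?b = "pdx \<nu> (pdx \<mu> f)"
  assume ne: "?a x \<noteq> ?b x"
  define e where "e = \<bar>?a x - ?b x\<bar> / 2"
  have e: "e > 0" using ne by (simp add: e_def)
  have ca: "continuous (at x) ?a" and cb: "continuous (at x) ?b"
    using smooth4_diff[OF smooth4_pdx[OF smooth4_pdx[OF sf]]] differentiable_imp_continuous_within
    by blast+
  obtain d1 where d1: "d1 > 0" "\<And>p. dist p x < d1 \<Longrightarrow> dist (?a p) (?a x) < e"
    using ca e unfolding continuous_at_eps_delta by blast
  obtain d2 where d2: "d2 > 0" "\<And>p. dist p x < d2 \<Longrightarrow> dist (?b p) (?b x) < e"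
    using cb e unfolding continuous_at_eps_delta by blast
  define h where "h = min d1 d2 / 4"
  have h: "h > 0" using d1 d2 by (simp add: h_def)
  obtain \<xi> \<eta> where xe: "0 < \<xi>" "\<xi> < h" "0 < \<eta>" "\<eta> < h" and E1:
     "f (x + h *\<^sub>R axis \<nu> 1 + h *\<^sub>R axis \<mu> 1) - f (x + h *\<^sub>R axis \<nu> 1) - f (x + h *\<^sub>R axis \<mu> 1) + f x
       = h * h * ?a (x + \<xi> *\<^sub>R axis \<nu> 1 + \<eta> *\<^sub>R axis \<mu> 1)"
    using mixed_mvt[OF sf h] by blast
  obtain \<xi>' \<eta>' where xe': "0 < \<xi>'" "\<xi>' < h" "0 < \<eta>'" "\<eta>' < h" and E2:
     "f (x + h *\<^sub>R axis \<mu> 1 + h *\<^sub>R axis \<nu> 1) - f (x + h *\<^sub>R axis \<mu> 1) - f (x + h *\<^sub>R axis \<nu> 1) + f x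
       = h * h * ?b (x + \<xi>' *\<^sub>R axis \<mu> 1 + \<eta>' *\<^sub>R axis \<nu> 1)"
    using mixed_mvt[OF sf h, where x=x and \<mu>=\<nu> and \<nu>=\<mu>] by blast
  define p where "p = x + \<xi> *\<^sub>R axis \<nu> 1 + \<eta> *\<^sub>R axis \<mu> (1::real)"
  define q where "q = x + \<xi>' *\<^sub>R axis \<mu> 1 + \<eta>' *\<^sub>R axis \<nu> (1::real)"
  have "?a p = ?b q"
  proof -
    have "h * h * ?a p = h * h * ?b q"
      using E1 E2 unfolding p_def q_def by (simp add: algebra_simps)
    then show ?thesis using h by simp
  qed
  have np: "dist p x < d1"
  proof -
    have "dist p x = norm (\<xi> *\<^sub>R axis \<nu> 1 + \<eta> *\<^sub>R axis \<mu> (1::real) :: real^4)"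
      unfolding p_def dist_norm by (simp add: algebra_simps)
    also have "\<dots> \<le> norm (\<xi> *\<^sub>R axis \<nu> (1::real) :: real^4) + norm (\<eta> *\<^sub>R axis \<mu> (1::real) :: real^4)"
      by (rule norm_triangle_ineq)
    also have "\<dots> = \<xi> + \<eta>" using xe by simp
    also have "\<dots> < d1" using xe d1 d2 unfolding h_def by linarith
    finally show ?thesis .
  qed
  have nq: "dist q x < d2"
  proof -
    have "dist q x = norm (\<xi>' *\<^sub>R axis \<mu> 1 + \<eta>' *\<^sub>R axis \<nu> (1::real) :: real^4)"
      unfolding q_def dist_norm by (simp add: algebra_simps)
    also have "\<dots> \<le> norm (\<xi>' *\<^sub>R axis \<mu> (1::real) :: real^4) + norm (\<eta>' *\<^sub>R axis \<nu> (1::real) :: real^4)"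
      by (rule norm_triangle_ineq)
    also have "\<dots> = \<xi>' + \<eta>'" using xe' by simp
    also have "\<dots> < d2" using xe' d1 d2 unfolding h_def by linarith
    finally show ?thesis .
  qed
  have "\<bar>?a p - ?a x\<bar> < e" using d1(2)[OF np] by (simp add: dist_real_def)
  moreover have "\<bar>?b q - ?b x\<bar> < e" using d2(2)[OF nq] by (simp add: dist_real_def)
  ultimately have "\<bar>?a x - ?b x\<bar> < 2 * e" using \<open>?a p = ?b q\<close> by linarith
  then show False unfolding e_def by simp
qed




section \<open>Polynomials in epsilon with smooth coefficients\<close>

inductive_set polyeps :: "(real \<Rightarrow> real^4 \<Rightarrow> real) set" where
  pe_const: "smooth4 f \<Longrightarrow> (\<lambda>\<epsilon> y. f y) \<in> polyeps"
| pe_eps: "(\<lambda>\<epsilon> y. \<epsilon>) \<in> polyeps"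
| pe_add: "F \<in> polyeps \<Longrightarrow> G \<in> polyeps \<Longrightarrow> (\<lambda>\<epsilon> y. F \<epsilon> y + G \<epsilon> y) \<in> polyeps"
| pe_mult: "F \<in> polyeps \<Longrightarrow> G \<in> polyeps \<Longrightarrow> (\<lambda>\<epsilon> y. F \<epsilon> y * G \<epsilon> y) \<in> polyeps"

lemma pe_smooth: "F \<in> polyeps \<Longrightarrow> smooth4 (F \<epsilon>)"
  by (induction rule: polyeps.induct) (auto intro: smooth4_const smooth4_add smooth4_mult)

lemma pe_cnst: "(\<lambda>\<epsilon> y. c) \<in> polyeps"
  using pe_const[OF smooth4_const] .

lemma pe_neg: "F \<in> polyeps \<Longrightarrow> (\<lambda>\<epsilon> y. - F \<epsilon> y) \<in> polyeps"
  using pe_mult[OF pe_cnst[of "-1"]] by simp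

lemma pe_diff: "F \<in> polyeps \<Longrightarrow> G \<in> polyeps \<Longrightarrow> (\<lambda>\<epsilon> y. F \<epsilon> y - G \<epsilon> y) \<in> polyeps"
  using pe_add[OF _ pe_neg] by simp

lemma pe_sum: "finite I \<Longrightarrow> (\<And>i. i \<in> I \<Longrightarrow> (\<lambda>\<epsilon> y. F i \<epsilon> y) \<in> polyeps) \<Longrightarrow> (\<lambda>\<epsilon> y. \<Sum>i\<in>I. F i \<epsilon> y) \<in> polyeps"
  by (induction I rule: finite_induct) (auto intro: pe_cnst pe_add)

lemma pe_pdx: "F \<in> polyeps \<Longrightarrow> (\<lambda>\<epsilon> y. pdx \<mu> (F \<epsilon>) y) \<in> polyeps"
proof (induction rule: polyeps.induct)
  case (pe_const f) then show ?case by (simp add: polyeps.pe_const smooth4_pdx)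
next
  case pe_eps then show ?case by (simp add: pdx_const pe_cnst)
next
  case (pe_add F G)
  have "pdx \<mu> (\<lambda>y. F \<epsilon> y + G \<epsilon> y) y = pdx \<mu> (F \<epsilon>) y + pdx \<mu> (G \<epsilon>) y" for \<epsilon> y
    using smooth4_diff[OF pe_smooth[OF pe_add.hyps(1)]] smooth4_diff[OF pe_smooth[OF pe_add.hyps(2)]] by (rule pdx_add)
  then show ?case using polyeps.pe_add[OF pe_add.IH] by simp
next
  case (pe_mult F G)
  have "pdx \<mu> (\<lambda>y. F \<epsilon> y * G \<epsilon> y) y = pdx \<mu> (F \<epsilon>) y * G \<epsilon> y + F \<epsilon> y * pdx \<mu> (G \<epsilon>) y" for \<epsilon> y
    using smooth4_diff[OF pe_smooth[OF pe_mult.hyps(1)]] smooth4_diff[OF pe_smooth[OF pe_mult.hyps(2)]] by (rule pdx_mult)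
  then show ?case using polyeps.pe_add[OF polyeps.pe_mult[OF pe_mult.IH(1) pe_mult.hyps(2)] polyeps.pe_mult[OF pe_mult.hyps(1) pe_mult.IH(2)]] by simp
qed

lemma pe_split: "F \<in> polyeps \<Longrightarrow> \<exists>G\<in>polyeps. \<forall>\<epsilon> y. F \<epsilon> y = F 0 y + \<epsilon> * G \<epsilon> y"
proof (induction rule: polyeps.induct)
  case (pe_const f) then show ?case using pe_cnst[of 0] by (intro bexI[of _ "\<lambda>\<epsilon> y. 0"]) auto
next
  case pe_eps then show ?case using pe_cnst[of 1] by (intro bexI[of _ "\<lambda>\<epsilon> y. 1"]) auto
next
  case (pe_add F G)
  then obtain F1 G1 where f1: "F1 \<in> polyeps" "G1 \<in> polyeps" and eF: "\<forall>\<epsilon> y. F \<epsilon> y = F 0 y + \<epsilon> * F1 \<epsilon> y"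
    and eG: "\<forall>\<epsilon> y. G \<epsilon> y = G 0 y + \<epsilon> * G1 \<epsilon> y" by blast
  show ?case
  proof (intro bexI[of _ "\<lambda>\<epsilon> y. F1 \<epsilon> y + G1 \<epsilon> y"] allI)
    fix \<epsilon> y
    show "F \<epsilon> y + G \<epsilon> y = F 0 y + G 0 y + \<epsilon> * (F1 \<epsilon> y + G1 \<epsilon> y)"
      unfolding distrib_left using eF[rule_format, of \<epsilon> y] eG[rule_format, of \<epsilon> y] by linarith
  qed (use f1 in \<open>rule polyeps.pe_add\<close>)
next
  case (pe_mult F G)
  then obtain F1 G1 where f1: "F1 \<in> polyeps" "G1 \<in> polyeps" and e: "\<forall>\<epsilon> y. F \<epsilon> y = F 0 y + \<epsilon> * F1 \<epsilon> y"
    "\<forall>\<epsilon> y. G \<epsilon> y = G 0 y + \<epsilon> * G1 \<epsilon> y" by blast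
  have F0: "(\<lambda>\<epsilon> y. F 0 y) \<in> polyeps" "(\<lambda>\<epsilon> y. G 0 y) \<in> polyeps"
    using pe_mult by (auto intro: polyeps.pe_const pe_smooth)
  show ?case
  proof (intro bexI[of _ "\<lambda>\<epsilon> y. F1 \<epsilon> y * G 0 y + F 0 y * G1 \<epsilon> y + \<epsilon> * (F1 \<epsilon> y * G1 \<epsilon> y)"] allI)
    fix \<epsilon> y
    show "F \<epsilon> y * G \<epsilon> y = F 0 y * G 0 y + \<epsilon> * (F1 \<epsilon> y * G 0 y + F 0 y * G1 \<epsilon> y + \<epsilon> * (F1 \<epsilon> y * G1 \<epsilon> y))"
      unfolding e(1)[rule_format, of \<epsilon> y] e(2)[rule_format, of \<epsilon> y] by (simp add: algebra_simps)
  next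
    show "(\<lambda>\<epsilon> y. F1 \<epsilon> y * G 0 y + F 0 y * G1 \<epsilon> y + \<epsilon> * (F1 \<epsilon> y * G1 \<epsilon> y)) \<in> polyeps"
      using f1 F0 by (intro polyeps.pe_add polyeps.pe_mult polyeps.pe_eps)
  qed
qed

lemma pe_cont: "F \<in> polyeps \<Longrightarrow> isCont (\<lambda>\<epsilon>. F \<epsilon> y) e"
  by (induction rule: polyeps.induct) auto

section \<open>Polynomial functions of jet variables\<close>

inductive_set polyfun :: "(real \<Rightarrow> real^4 \<Rightarrow> ('v \<Rightarrow> real) \<Rightarrow> real) set" where
  pf_const: "smooth4 f \<Longrightarrow> (\<lambda>\<epsilon> y q. f y) \<in> polyfun"
| pf_eps: "(\<lambda>\<epsilon> y q. \<epsilon>) \<in> polyfun"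
| pf_var: "(\<lambda>\<epsilon> y q. q v) \<in> polyfun"
| pf_add: "F \<in> polyfun \<Longrightarrow> G \<in> polyfun \<Longrightarrow> (\<lambda>\<epsilon> y q. F \<epsilon> y q + G \<epsilon> y q) \<in> polyfun"
| pf_mult: "F \<in> polyfun \<Longrightarrow> G \<in> polyfun \<Longrightarrow> (\<lambda>\<epsilon> y q. F \<epsilon> y q * G \<epsilon> y q) \<in> polyfun"

lemma pf_cnst: "(\<lambda>\<epsilon> y q. c) \<in> polyfun"
  using pf_const[OF smooth4_const] .

lemma pf_neg: "F \<in> polyfun \<Longrightarrow> (\<lambda>\<epsilon> y q. - F \<epsilon> y q) \<in> polyfun"
  using pf_mult[OF pf_cnst[of "-1"]] by simp

lemma pf_diff: "F \<in> polyfun \<Longrightarrow> G \<in> polyfun \<Longrightarrow> (\<lambda>\<epsilon> y q. F \<epsilon> y q - G \<epsilon> y q) \<in> polyfun"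
  using pf_add[OF _ pf_neg] by simp

lemma pf_sum: "finite I \<Longrightarrow> (\<And>i. i \<in> I \<Longrightarrow> (\<lambda>\<epsilon> y q. F i \<epsilon> y q) \<in> polyfun) \<Longrightarrow> (\<lambda>\<epsilon> y q. \<Sum>i\<in>I. F i \<epsilon> y q) \<in> polyfun"
  by (induction I rule: finite_induct) (auto intro: pf_cnst pf_add)

lemma pf_deriv: "F \<in> polyfun \<Longrightarrow> \<exists>F'\<in>polyfun. \<forall>\<epsilon> y q s.
   ((\<lambda>t. F \<epsilon> y (q(v:=t))) has_real_derivative F' \<epsilon> y (q(v:=s))) (at s)"
proof (induction rule: polyfun.induct)
  case (pf_const f) then show ?case using pf_cnst[of 0] by (intro bexI[of _ "\<lambda>\<epsilon> y q. 0"]) (auto intro: DERIV_const)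
next
  case pf_eps then show ?case using pf_cnst[of 0] by (intro bexI[of _ "\<lambda>\<epsilon> y q. 0"]) (auto intro: DERIV_const)
next
  case (pf_var w)
  show ?case
  proof (cases "w = v")
    case True then show ?thesis using pf_cnst[of 1] by (intro bexI[of _ "\<lambda>\<epsilon> y q. 1"]) (auto intro: DERIV_ident)
  next
    case False then show ?thesis using pf_cnst[of 0] by (intro bexI[of _ "\<lambda>\<epsilon> y q. 0"]) (auto intro: DERIV_const)
  qed
next
  case (pf_add F G)
  then obtain F' G' where "F' \<in> polyfun" "G' \<in> polyfun"
    "\<forall>\<epsilon> y q s. ((\<lambda>t. F \<epsilon> y (q(v:=t))) has_real_derivative F' \<epsilon> y (q(v:=s))) (at s)"
    "\<forall>\<epsilon> y q s. ((\<lambda>t. G \<epsilon> y (q(v:=t))) has_real_derivative G' \<epsilon> y (q(v:=s))) (at s)" by blast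
  then show ?case
    by (intro bexI[of _ "\<lambda>\<epsilon> y q. F' \<epsilon> y q + G' \<epsilon> y q"] allI DERIV_add) (auto intro: polyfun.pf_add simp del: fun_upd_apply)
next
  case (pf_mult F G)
  then obtain F' G' where p: "F' \<in> polyfun" "G' \<in> polyfun" and
    dF: "\<forall>\<epsilon> y q s. ((\<lambda>t. F \<epsilon> y (q(v:=t))) has_real_derivative F' \<epsilon> y (q(v:=s))) (at s)" and
    dG: "\<forall>\<epsilon> y q s. ((\<lambda>t. G \<epsilon> y (q(v:=t))) has_real_derivative G' \<epsilon> y (q(v:=s))) (at s)" by blast
  show ?case
  proof (intro bexI[of _ "\<lambda>\<epsilon> y q. F' \<epsilon> y q * G \<epsilon> y q + F \<epsilon> y q * G' \<epsilon> y q"] allI)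
    fix \<epsilon> y q s
    show "((\<lambda>t. F \<epsilon> y (q(v:=t)) * G \<epsilon> y (q(v:=t))) has_real_derivative
       F' \<epsilon> y (q(v:=s)) * G \<epsilon> y (q(v:=s)) + F \<epsilon> y (q(v:=s)) * G' \<epsilon> y (q(v:=s))) (at s)"
      by (rule DERIV_cong[OF DERIV_mult[OF dF[rule_format] dG[rule_format]]]) (simp add: algebra_simps)
  next
    show "(\<lambda>\<epsilon> y q. F' \<epsilon> y q * G \<epsilon> y q + F \<epsilon> y q * G' \<epsilon> y q) \<in> polyfun"
      using p pf_mult.hyps by (intro polyfun.pf_add polyfun.pf_mult)
  qed
qed

lemma pf_pdj: "F \<in> polyfun \<Longrightarrow> \<exists>F'\<in>polyfun. \<forall>\<epsilon> y q. pdj (F \<epsilon> y) q v = F' \<epsilon> y q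
   \<and> ((\<lambda>t. F \<epsilon> y (q(v:=t))) has_real_derivative F' \<epsilon> y q) (at (q v))"
proof -
  assume "F \<in> polyfun"
  from pf_deriv[OF this, of v] obtain F' where F': "F' \<in> polyfun" and
    d: "\<forall>\<epsilon> y q s. ((\<lambda>t. F \<epsilon> y (q(v:=t))) has_real_derivative F' \<epsilon> y (q(v:=s))) (at s)" by blast
  have "((\<lambda>t. F \<epsilon> y (q(v:=t))) has_real_derivative F' \<epsilon> y q) (at (q v))" for \<epsilon> y q
    using d[rule_format, of \<epsilon> y q "q v"] by simp
  then show ?thesis using F' unfolding pdj_def by (intro bexI[of _ F'] allI conjI DERIV_imp_deriv)
qed

lemma pf_comp: "F \<in> polyfun \<Longrightarrow> (\<And>v. (\<lambda>\<epsilon> y. jet \<epsilon> y v) \<in> polyeps) \<Longrightarrow> (\<lambda>\<epsilon> y. F \<epsilon> y (jet \<epsilon> y)) \<in> polyeps"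
  by (induction rule: polyfun.induct) (auto intro: pe_const pe_eps pe_add pe_mult)

lemma pf_pdj_pe:
  assumes "F \<in> polyfun" "\<And>v. (\<lambda>\<epsilon> y. jet \<epsilon> y v) \<in> polyeps"
  shows "(\<lambda>\<epsilon> y. pdj (F \<epsilon> y) (jet \<epsilon> y) v) \<in> polyeps"
proof -
  obtain F' where "F' \<in> polyfun" "\<forall>\<epsilon> y q. pdj (F \<epsilon> y) q v = F' \<epsilon> y q" using pf_pdj[OF assms(1), of v] by blast
  then show ?thesis using pf_comp[OF _ assms(2)] by simp
qed

lemma pf_hasderiv:
  assumes "F \<in> polyfun"
  shows "((\<lambda>t. F \<epsilon> y (q(v:=t))) has_real_derivative pdj (F \<epsilon> y) q v) (at (q v))"
  using pf_pdj[OF assms, of v] by auto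

lemma pdj_add:
  assumes "((\<lambda>t. g (q(v:=t))) has_real_derivative a) (at (q v))"
    "((\<lambda>t. h (q(v:=t))) has_real_derivative b) (at (q v))"
  shows "pdj (\<lambda>q. g q + h q) q v = a + b"
  unfolding pdj_def using DERIV_add[OF assms] by (rule DERIV_imp_deriv)

lemma pdj_eq:
  assumes "((\<lambda>t. g (q(v:=t))) has_real_derivative a) (at (q v))"
  shows "pdj g q v = a"
  unfolding pdj_def using assms by (rule DERIV_imp_deriv)




lemmas pf_intros = pf_add pf_diff pf_mult pf_neg pf_sum pf_var pf_eps pf_cnst finite
lemmas sm_intros = smooth4_add smooth4_mult smooth4_diff_fun smooth4_minus smooth4_sum smooth4_const smooth4_pdx

lemma Lws_pf: "(\<lambda>\<epsilon> y p. Lws (scale_theta \<epsilon> \<Theta>) p) \<in> polyfun"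
  unfolding Lws_def Fl_def Flup_def scale_theta_def
  by (intro pf_intros)

lemma LJ_pf: assumes sJ: "\<forall>\<mu>. smooth4 (J \<mu>)"
  shows "(\<lambda>\<epsilon> y p. LJ (scale_theta \<epsilon> \<Theta>) (\<lambda>\<mu>. J \<mu> y) p) \<in> polyfun"
  unfolding LJ_def scale_theta_def
  by (intro pf_intros pf_const sJ[rule_format])

lemma Hws_pf: "(\<lambda>\<epsilon> y q. Hws (scale_theta \<epsilon> \<Theta>) q) \<in> polyfun"
  unfolding Hws_def Fc_def Fcup_def scale_theta_def
  by (intro pf_intros)

lemma HJ_pf: assumes sJ: "\<forall>\<mu>. smooth4 (J \<mu>)"
  shows "(\<lambda>\<epsilon> y q. HJ (scale_theta \<epsilon> \<Theta>) (\<lambda>\<mu>. J \<mu> y) q) \<in> polyfun"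
  unfolding HJ_def Fc_def scale_theta_def
  by (intro pf_intros pf_const sJ[rule_format])

lemma phi2_pf: assumes sJ: "\<forall>\<mu>. smooth4 (J \<mu>)"
  shows "(\<lambda>\<epsilon> y q. phi2 (scale_theta \<epsilon> \<Theta>) J y q) \<in> polyfun"
  unfolding phi2_def scale_theta_def
  by (intro pf_intros pf_const sJ[rule_format] smooth4_pdx)




lemma DERIV_upd: "((\<lambda>t. (q(v:=t)) w) has_real_derivative (if w = v then 1 else 0)) (at s)"
  by (cases "w = v") (auto intro: derivative_eq_intros)

lemma pdj_LJ: "pdj (LJ \<theta> Jx) p v =
   - (\<Sum>\<mu>\<in>UNIV. (if LA \<mu> = v then 1 else 0) * Jx \<mu>)
   - (\<Sum>\<mu>\<in>UNIV. \<Sum>\<alpha>\<in>UNIV. \<Sum>\<beta>\<in>UNIV. \<theta> \<mu> \<alpha> * Jx \<beta> *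
        ((if LA \<mu> = v then 1 else 0) * p (LdA \<alpha> \<beta>) + p (LA \<mu>) * (if LdA \<alpha> \<beta> = v then 1 else 0)))
   + (1/2) * (\<Sum>\<mu>\<in>UNIV. \<Sum>\<alpha>\<in>UNIV. \<Sum>\<beta>\<in>UNIV. \<theta> \<mu> \<alpha> * Jx \<beta> *
        ((if LA \<mu> = v then 1 else 0) * p (LdA \<beta> \<alpha>) + p (LA \<mu>) * (if LdA \<beta> \<alpha> = v then 1 else 0)))"
proof -
  have "((\<lambda>t. LJ \<theta> Jx (p(v:=t))) has_real_derivative
     - (\<Sum>\<mu>\<in>UNIV. (if LA \<mu> = v then 1 else 0) * Jx \<mu>)
   - (\<Sum>\<mu>\<in>UNIV. \<Sum>\<alpha>\<in>UNIV. \<Sum>\<beta>\<in>UNIV. \<theta> \<mu> \<alpha> * Jx \<beta> *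
        ((if LA \<mu> = v then 1 else 0) * p (LdA \<alpha> \<beta>) + p (LA \<mu>) * (if LdA \<alpha> \<beta> = v then 1 else 0)))
   + (1/2) * (\<Sum>\<mu>\<in>UNIV. \<Sum>\<alpha>\<in>UNIV. \<Sum>\<beta>\<in>UNIV. \<theta> \<mu> \<alpha> * Jx \<beta> *
        ((if LA \<mu> = v then 1 else 0) * p (LdA \<beta> \<alpha>) + p (LA \<mu>) * (if LdA \<beta> \<alpha> = v then 1 else 0))))
     (at (p v))"
    unfolding LJ_def
    apply (rule DERIV_cong)
     apply (rule derivative_intros DERIV_upd)+
    apply (simp add: algebra_simps)
    done
  then show ?thesis by (rule pdj_eq)
qed

lemma pdj_const_upd:
  assumes "\<And>t. g (p(v:=t)) = c"
  shows "pdj g p v = 0"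
  unfolding pdj_def assms by simp

lemma Lws_Fl: "Fl p = Fl p' \<Longrightarrow> Lws \<theta> p = Lws \<theta> p'"
  unfolding Lws_def Flup_def by simp

lemma Fl_upd_LA: "Fl (p(LA \<nu> := s)) = Fl p"
  unfolding Fl_def by (auto intro!: ext)

lemma Fl_upd_diag: "Fl (p(LdA \<mu> \<mu> := s)) = Fl p"
  unfolding Fl_def by (auto intro!: ext)

lemma Fl_upd_swap: "\<mu> \<noteq> \<nu> \<Longrightarrow> Fl (p(LdA \<mu> \<nu> := s)) = Fl (p(LdA \<nu> \<mu> := p (LdA \<nu> \<mu>) + p (LdA \<mu> \<nu>) - s))"
  unfolding Fl_def by (auto intro!: ext)

lemma pdj_Lws_LA: "pdj (Lws \<theta>) p (LA \<nu>) = 0"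
  by (rule pdj_const_upd[of _ _ _ "Lws \<theta> p"]) (rule Lws_Fl[OF Fl_upd_LA])

lemma pdj_Lws_antisym:
  assumes d: "((\<lambda>t. Lws \<theta> (p(LdA \<nu> \<mu> := t))) has_real_derivative D) (at (p (LdA \<nu> \<mu>)))"
  shows "pdj (Lws \<theta>) p (LdA \<mu> \<nu>) = - pdj (Lws \<theta>) p (LdA \<nu> \<mu>)"
proof (cases "\<mu> = \<nu>")
  case True
  have "pdj (Lws \<theta>) p (LdA \<mu> \<nu>) = 0"
    by (rule pdj_const_upd[of _ _ _ "Lws \<theta> p"]) (use True Lws_Fl[OF Fl_upd_diag] in simp)
  then show ?thesis using True by simp
next
  case False
  let ?c = "p (LdA \<nu> \<mu>) + p (LdA \<mu> \<nu>)"
  have eq: "(\<lambda>s. Lws \<theta> (p(LdA \<mu> \<nu> := s))) = (\<lambda>s. Lws \<theta> (p(LdA \<nu> \<mu> := ?c - s)))"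
    using Lws_Fl[OF Fl_upd_swap[OF False]] by simp
  have d1: "((\<lambda>s. ?c - s) has_real_derivative -1) (at (p (LdA \<mu> \<nu>)))"
    by (auto intro!: derivative_eq_intros)
  have d2: "((\<lambda>t. Lws \<theta> (p(LdA \<nu> \<mu> := t))) has_real_derivative D) (at (?c - p (LdA \<mu> \<nu>)))"
    using d by simp
  have "((\<lambda>s. Lws \<theta> (p(LdA \<nu> \<mu> := ?c - s))) has_real_derivative D * -1) (at (p (LdA \<mu> \<nu>)))"
    using DERIV_chain'[OF d1 d2] by simp
  then have "pdj (Lws \<theta>) p (LdA \<mu> \<nu>) = - D"
    unfolding pdj_def eq by (simp add: DERIV_imp_deriv)
  moreover have "pdj (Lws \<theta>) p (LdA \<nu> \<mu>) = D" using d by (rule pdj_eq)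
  ultimately show ?thesis by simp
qed




lemma pdx_addf: "smooth4 f \<Longrightarrow> smooth4 g \<Longrightarrow> pdx \<mu> (\<lambda>y. f y + g y) = (\<lambda>y. pdx \<mu> f y + pdx \<mu> g y)"
  by (rule ext, rule pdx_add) (auto intro: smooth4_diff)

lemma pdx_multf: "smooth4 f \<Longrightarrow> smooth4 g \<Longrightarrow> pdx \<mu> (\<lambda>y. f y * g y) = (\<lambda>y. pdx \<mu> f y * g y + f y * pdx \<mu> g y)"
  by (rule ext, rule pdx_mult) (auto intro: smooth4_diff)

lemma pdx_constf: "pdx \<mu> (\<lambda>y. c) = (\<lambda>y. 0)"
  by (rule ext, rule pdx_const)

lemma pdx_cmultf: "smooth4 f \<Longrightarrow> pdx \<mu> (\<lambda>y. c * f y) = (\<lambda>y. c * pdx \<mu> f y)"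
  using pdx_multf[OF smooth4_const, of f \<mu> c] by (simp add: pdx_constf)

lemma pdx_minusf: "smooth4 f \<Longrightarrow> pdx \<mu> (\<lambda>y. - f y) = (\<lambda>y. - pdx \<mu> f y)"
  using pdx_cmultf[of f \<mu> "-1"] by simp

lemma pdx_difff: "smooth4 f \<Longrightarrow> smooth4 g \<Longrightarrow> pdx \<mu> (\<lambda>y. f y - g y) = (\<lambda>y. pdx \<mu> f y - pdx \<mu> g y)"
  using pdx_addf[OF _ smooth4_minus, of f g \<mu>] pdx_minusf[of g \<mu>] by simp

lemma pdx_sumf: "finite I \<Longrightarrow> (\<And>i. i \<in> I \<Longrightarrow> smooth4 (f i)) \<Longrightarrow> pdx \<mu> (\<lambda>y. \<Sum>i\<in>I. f i y) = (\<lambda>y. \<Sum>i\<in>I. pdx \<mu> (f i) y)"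
  by (rule ext, rule pdx_sum) (auto intro: smooth4_diff)

lemma clairaut_f: "smooth4 f \<Longrightarrow> pdx \<mu> (pdx \<nu> f) = pdx \<nu> (pdx \<mu> f)"
  by (rule ext, rule clairaut)

lemma ljet_pe: assumes "\<forall>\<mu>. smooth4 (A \<mu>)" shows "(\<lambda>\<epsilon> y. ljet A y v) \<in> polyeps"
proof (cases v)
  case (LA \<mu>) then show ?thesis using assms by (simp add: ljet_def pe_const)
next
  case (LdA \<mu> \<nu>) then show ?thesis using assms by (simp add: ljet_def pe_const smooth4_pdx)
qed

lemma Lws_deriv: "((\<lambda>t. Lws (scale_theta \<epsilon> \<Theta>) (p(v:=t))) has_real_derivative pdj (Lws (scale_theta \<epsilon> \<Theta>)) p v) (at (p v))"
  using pf_hasderiv[of "\<lambda>\<epsilon> y p. Lws (scale_theta \<epsilon> \<Theta>) p" \<epsilon> _ p v, OF Lws_pf] by simp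

lemma LJ_deriv: assumes "\<forall>\<mu>. smooth4 (J \<mu>)"
  shows "((\<lambda>t. LJ (scale_theta \<epsilon> \<Theta>) (\<lambda>\<mu>. J \<mu> y) (p(v:=t))) has_real_derivative pdj (LJ (scale_theta \<epsilon> \<Theta>) (\<lambda>\<mu>. J \<mu> y)) p v) (at (p v))"
  using pf_hasderiv[of "\<lambda>\<epsilon> y p. LJ (scale_theta \<epsilon> \<Theta>) (\<lambda>\<mu>. J \<mu> y) p" \<epsilon> y p v, OF LJ_pf[OF assms]] by simp

lemma pdj_Lag: assumes "\<forall>\<mu>. smooth4 (J \<mu>)"
  shows "pdj (Lag (scale_theta \<epsilon> \<Theta>) J y) p v = pdj (Lws (scale_theta \<epsilon> \<Theta>)) p v + pdj (LJ (scale_theta \<epsilon> \<Theta>) (\<lambda>\<mu>. J \<mu> y)) p v"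
proof -
  have "Lag (scale_theta \<epsilon> \<Theta>) J y = (\<lambda>p. Lws (scale_theta \<epsilon> \<Theta>) p + LJ (scale_theta \<epsilon> \<Theta>) (\<lambda>\<mu>. J \<mu> y) p)"
    by (rule ext) (simp add: Lag_def)
  then show ?thesis using pdj_add[OF Lws_deriv[where \<epsilon>=\<epsilon> and \<Theta>=\<Theta> and p=p and v=v] LJ_deriv[OF assms, where \<epsilon>=\<epsilon> and \<Theta>=\<Theta> and y=y and p=p and v=v]] by simp
qed

lemma Lws_smooth: assumes "\<forall>\<mu>. smooth4 (A \<mu>)"
  shows "smooth4 (\<lambda>y. pdj (Lws (scale_theta \<epsilon> \<Theta>)) (ljet A y) v)"
  using pe_smooth[OF pf_pdj_pe[of "\<lambda>\<epsilon> y p. Lws (scale_theta \<epsilon> \<Theta>) p" "\<lambda>\<epsilon> y. ljet A y" v, OF Lws_pf ljet_pe[OF assms]], of \<epsilon>] by simp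

lemma LJ_smooth: assumes "\<forall>\<mu>. smooth4 (A \<mu>)" "\<forall>\<mu>. smooth4 (J \<mu>)"
  shows "smooth4 (\<lambda>y. pdj (LJ (scale_theta \<epsilon> \<Theta>) (\<lambda>\<mu>. J \<mu> y)) (ljet A y) v)"
  using pe_smooth[OF pf_pdj_pe[of "\<lambda>\<epsilon> y p. LJ (scale_theta \<epsilon> \<Theta>) (\<lambda>\<mu>. J \<mu> y) p" "\<lambda>\<epsilon> y. ljet A y" v, OF LJ_pf[OF assms(2)] ljet_pe[OF assms(1)]], of \<epsilon>] by simp

lemma double_antisym_zero:
  assumes sW: "\<And>\<mu> \<nu>. smooth4 (W \<mu> \<nu>)" and aW: "\<And>\<mu> \<nu> y. W \<mu> \<nu> y = - W \<nu> \<mu> y"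
    and fin: "finite I"
  shows "(\<Sum>\<nu>\<in>I. \<Sum>\<mu>\<in>I. pdx \<nu> (pdx \<mu> (W \<mu> \<nu>)) x) = 0"
proof -
  let ?S = "\<Sum>\<nu>\<in>I. \<Sum>\<mu>\<in>I. pdx \<nu> (pdx \<mu> (W \<mu> \<nu>)) x"
  have "?S = (\<Sum>\<nu>\<in>I. \<Sum>\<mu>\<in>I. pdx \<mu> (pdx \<nu> (W \<mu> \<nu>)) x)"
    by (intro sum.cong refl clairaut sW)
  also have "\<dots> = (\<Sum>\<nu>\<in>I. \<Sum>\<mu>\<in>I. - pdx \<mu> (pdx \<nu> (W \<nu> \<mu>)) x)"
  proof -
    have "pdx \<mu> (pdx \<nu> (W \<mu> \<nu>)) x = - pdx \<mu> (pdx \<nu> (W \<nu> \<mu>)) x" for \<mu> \<nu>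
    proof -
      have e: "W \<mu> \<nu> = (\<lambda>y. - W \<nu> \<mu> y)" by (rule ext) (rule aW)
      show ?thesis by (simp only: e pdx_minusf[OF sW] pdx_minusf[OF smooth4_pdx[OF sW]])
    qed
    then show ?thesis by simp
  qed
  also have "\<dots> = - ?S"
    by (subst sum.swap) (simp add: sum_negf)
  finally show ?thesis by simp
qed

lemma divEB_struct:
  assumes sA: "\<forall>\<mu>. smooth4 (A \<mu>)" and sJ: "\<forall>\<mu>. smooth4 (J \<mu>)"
  shows "divEB (scale_theta \<epsilon> \<Theta>) A J x =
     (\<Sum>\<nu>\<in>UNIV. pdx \<nu> (\<lambda>y. pdj (LJ (scale_theta \<epsilon> \<Theta>) (\<lambda>\<mu>. J \<mu> y)) (ljet A y) (LA \<nu>)) x)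
   - (\<Sum>\<nu>\<in>UNIV. \<Sum>\<mu>\<in>UNIV. pdx \<nu> (pdx \<mu> (\<lambda>y. pdj (LJ (scale_theta \<epsilon> \<Theta>) (\<lambda>\<mu>. J \<mu> y)) (ljet A y) (LdA \<mu> \<nu>))) x)"
proof -
  let ?W = "\<lambda>\<mu> \<nu> y. pdj (Lws (scale_theta \<epsilon> \<Theta>)) (ljet A y) (LdA \<mu> \<nu>)"
  let ?G = "\<lambda>\<mu> \<nu> y. pdj (LJ (scale_theta \<epsilon> \<Theta>) (\<lambda>\<mu>. J \<mu> y)) (ljet A y) (LdA \<mu> \<nu>)"
  let ?P = "\<lambda>\<nu> y. pdj (LJ (scale_theta \<epsilon> \<Theta>) (\<lambda>\<mu>. J \<mu> y)) (ljet A y) (LA \<nu>)"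
  have sW: "smooth4 (?W \<mu> \<nu>)" for \<mu> \<nu> by (rule Lws_smooth[OF sA])
  have sG: "smooth4 (?G \<mu> \<nu>)" for \<mu> \<nu> by (rule LJ_smooth[OF sA sJ])
  have sP: "smooth4 (?P \<nu>)" for \<nu> by (rule LJ_smooth[OF sA sJ])
  have aW: "?W \<mu> \<nu> y = - ?W \<nu> \<mu> y" for \<mu> \<nu> y
    by (rule pdj_Lws_antisym[OF Lws_deriv])
  have EB: "EB (scale_theta \<epsilon> \<Theta>) A J \<nu> = (\<lambda>y. ?P \<nu> y - (\<Sum>\<mu>\<in>UNIV. pdx \<mu> (?W \<mu> \<nu>) y + pdx \<mu> (?G \<mu> \<nu>) y))" for \<nu>
  proof (rule ext)
    fix y
    show "EB (scale_theta \<epsilon> \<Theta>) A J \<nu> y = ?P \<nu> y - (\<Sum>\<mu>\<in>UNIV. pdx \<mu> (?W \<mu> \<nu>) y + pdx \<mu> (?G \<mu> \<nu>) y)"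
      unfolding EB_def pdj_Lag[OF sJ] pdj_Lws_LA pdx_addf[OF sW sG] by simp
  qed
  have sPW: "smooth4 (pdx \<mu> (?W \<mu> \<nu>))" "smooth4 (pdx \<mu> (?G \<mu> \<nu>))" for \<mu> \<nu>
    using sW sG by (auto intro: smooth4_pdx)
  have sS: "smooth4 (\<lambda>y. \<Sum>\<mu>\<in>UNIV. pdx \<mu> (?W \<mu> \<nu>) y + pdx \<mu> (?G \<mu> \<nu>) y)" for \<nu>
    by (intro smooth4_sum smooth4_add sPW finite)
  have "pdx \<nu> (EB (scale_theta \<epsilon> \<Theta>) A J \<nu>) x = pdx \<nu> (?P \<nu>) x
     - ((\<Sum>\<mu>\<in>UNIV. pdx \<nu> (pdx \<mu> (?W \<mu> \<nu>)) x) + (\<Sum>\<mu>\<in>UNIV. pdx \<nu> (pdx \<mu> (?G \<mu> \<nu>)) x))" for \<nu>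
    unfolding EB pdx_difff[OF sP sS] pdx_sumf[OF finite smooth4_add[OF sPW]] pdx_addf[OF sPW]
    by (simp add: sum.distrib)
  then have "divEB (scale_theta \<epsilon> \<Theta>) A J x = (\<Sum>\<nu>\<in>UNIV. pdx \<nu> (?P \<nu>) x)
     - (\<Sum>\<nu>\<in>UNIV. \<Sum>\<mu>\<in>UNIV. pdx \<nu> (pdx \<mu> (?W \<mu> \<nu>)) x) - (\<Sum>\<nu>\<in>UNIV. \<Sum>\<mu>\<in>UNIV. pdx \<nu> (pdx \<mu> (?G \<mu> \<nu>)) x)"
    unfolding divEB_def by (simp add: sum_subtractf sum.distrib)
  moreover have "(\<Sum>\<nu>\<in>UNIV. \<Sum>\<mu>\<in>UNIV. pdx \<nu> (pdx \<mu> (?W \<mu> \<nu>)) x) = 0"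
    by (rule double_antisym_zero[OF sW aW finite])
  ultimately show ?thesis by simp
qed




lemma cl01: "smooth4 f \<Longrightarrow> pdx 1 (pdx 0 f) = pdx 0 (pdx 1 f)" by (rule clairaut_f)
lemma cl02: "smooth4 f \<Longrightarrow> pdx 2 (pdx 0 f) = pdx 0 (pdx 2 f)" by (rule clairaut_f)
lemma cl03: "smooth4 f \<Longrightarrow> pdx 3 (pdx 0 f) = pdx 0 (pdx 3 f)" by (rule clairaut_f)
lemma cl12: "smooth4 f \<Longrightarrow> pdx 2 (pdx 1 f) = pdx 1 (pdx 2 f)" by (rule clairaut_f)
lemma cl13: "smooth4 f \<Longrightarrow> pdx 3 (pdx 1 f) = pdx 1 (pdx 3 f)" by (rule clairaut_f)
lemma cl23: "smooth4 f \<Longrightarrow> pdx 3 (pdx 2 f) = pdx 2 (pdx 3 f)" by (rule clairaut_f)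

lemma smooth4_divc: "smooth4 f \<Longrightarrow> smooth4 (\<lambda>y. f y / c)"
  using smooth4_cmult[of f "1/c"] by simp

lemma pdx_divf: "smooth4 f \<Longrightarrow> pdx \<mu> (\<lambda>y. f y / c) = (\<lambda>y. pdx \<mu> f y / c)"
  using pdx_cmultf[of f \<mu> "1/c"] by simp

lemmas cl_rules = cl01 cl02 cl03 cl12 cl13 cl23
lemmas pdx_rules = pdx_divf pdx_addf pdx_multf pdx_difff pdx_minusf pdx_constf
lemmas sm_rules = smooth4_divc smooth4_add smooth4_mult smooth4_diff_fun smooth4_minus smooth4_const smooth4_pdx

lemma Theta_rules:
  fixes \<Theta> :: "4 \<Rightarrow> 4 \<Rightarrow> real"
  assumes antisym: "\<forall>\<mu> \<nu>. \<Theta> \<mu> \<nu> = - \<Theta> \<nu> \<mu>" and no_time: "\<forall>i. \<Theta> 0 i = 0"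
  shows "\<Theta> 0 i = 0" "\<Theta> i 0 = 0" "\<Theta> 1 1 = 0" "\<Theta> 2 2 = 0" "\<Theta> 3 3 = 0"
    "\<Theta> 2 1 = - \<Theta> 1 2" "\<Theta> 3 1 = - \<Theta> 1 3" "\<Theta> 3 2 = - \<Theta> 2 3"
proof -
  have a: "\<Theta> a b = - \<Theta> b a" for a b using antisym by blast
  show "\<Theta> 0 i = 0" using no_time by blast
  show "\<Theta> i 0 = 0" using a[of i 0] no_time by simp
  show "\<Theta> 1 1 = 0" using a[of 1 1] by simp
  show "\<Theta> 2 2 = 0" using a[of 2 2] by simp
  show "\<Theta> 3 3 = 0" using a[of 3 3] by simp
  show "\<Theta> 2 1 = - \<Theta> 1 2" by (rule a)
  show "\<Theta> 3 1 = - \<Theta> 1 3" by (rule a)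
  show "\<Theta> 3 2 = - \<Theta> 2 3" by (rule a)
qed

lemma divEB_val:
  assumes antisym: "\<forall>\<mu> \<nu>. \<Theta> \<mu> \<nu> = - \<Theta> \<nu> \<mu>" and no_time: "\<forall>i. \<Theta> 0 i = 0"
    and sA: "\<forall>\<mu>. smooth4 (A \<mu>)" and sJ: "\<forall>\<mu>. smooth4 (J \<mu>)"
  shows "divEB (scale_theta \<epsilon> \<Theta>) A J x = Phi3cand (scale_theta \<epsilon> \<Theta>) A J x"
  unfolding divEB_struct[OF sA sJ] pdj_LJ Phi3cand_def divJ_def
  apply (simp add: sum_UNIV4 sum_spat ljet_def scale_theta_def Theta_rules[OF antisym no_time]
      sA[rule_format] sJ[rule_format] pdx_rules sm_rules cl_rules)
  apply (simp add: field_simps)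
  done




lemma double_antisym_zero_on:
  assumes sW: "\<And>\<mu> \<nu>. \<mu> \<in> I \<Longrightarrow> \<nu> \<in> I \<Longrightarrow> smooth4 (W \<mu> \<nu>)"
    and aW: "\<And>\<mu> \<nu> y. \<mu> \<in> I \<Longrightarrow> \<nu> \<in> I \<Longrightarrow> W \<mu> \<nu> y = - W \<nu> \<mu> y"
  shows "(\<Sum>\<nu>\<in>I. \<Sum>\<mu>\<in>I. pdx \<nu> (pdx \<mu> (W \<mu> \<nu>)) x) = 0"
proof -
  let ?S = "\<Sum>\<nu>\<in>I. \<Sum>\<mu>\<in>I. pdx \<nu> (pdx \<mu> (W \<mu> \<nu>)) x"
  have "?S = (\<Sum>\<nu>\<in>I. \<Sum>\<mu>\<in>I. pdx \<mu> (pdx \<nu> (W \<mu> \<nu>)) x)"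
    by (intro sum.cong refl clairaut sW)
  also have "\<dots> = (\<Sum>\<nu>\<in>I. \<Sum>\<mu>\<in>I. - pdx \<mu> (pdx \<nu> (W \<nu> \<mu>)) x)"
  proof (intro sum.cong refl)
    fix \<mu> \<nu> assume h: "\<mu> \<in> I" "\<nu> \<in> I"
    have e: "W \<mu> \<nu> = (\<lambda>y. - W \<nu> \<mu> y)" by (rule ext) (rule aW[OF h])
    show "pdx \<mu> (pdx \<nu> (W \<mu> \<nu>)) x = - pdx \<mu> (pdx \<nu> (W \<nu> \<mu>)) x"
      by (simp only: e pdx_minusf[OF sW[OF h(2,1)]] pdx_minusf[OF smooth4_pdx[OF sW[OF h(2,1)]]])
  qed
  also have "\<dots> = - ?S"
    by (subst sum.swap) (simp add: sum_negf)
  finally show ?thesis by simp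
qed

lemma Hws_eq: "Fc q = Fc q' \<Longrightarrow> (\<forall>m. q (CP m) = q' (CP m)) \<Longrightarrow> (\<forall>l. q (CdA l 0) = q' (CdA l 0)) \<Longrightarrow> Hws \<theta> q = Hws \<theta> q'"
  unfolding Hws_def Fcup_def by simp

lemma Fc_upd_CA: "Fc (q(CA i := s)) = Fc q"
  unfolding Fc_def by (auto intro!: ext)
lemma Fc_upd_CdP: "Fc (q(CdP j k := s)) = Fc q"
  unfolding Fc_def by (auto intro!: ext)
lemma Fc_upd_diag: "Fc (q(CdA i i := s)) = Fc q"
  unfolding Fc_def by (auto intro!: ext)
lemma Fc_upd_swap: "j \<noteq> i \<Longrightarrow> Fc (q(CdA j i := s)) = Fc (q(CdA i j := q (CdA i j) + q (CdA j i) - s))"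
  unfolding Fc_def by (auto intro!: ext)

lemma pdj_Hws_CA: "pdj (Hws \<theta>) q (CA i) = 0"
  by (rule pdj_const_upd[of _ _ _ "Hws \<theta> q"]) (rule Hws_eq[OF Fc_upd_CA]; simp)

lemma pdj_Hws_CdP: "pdj (Hws \<theta>) q (CdP j k) = 0"
  by (rule pdj_const_upd[of _ _ _ "Hws \<theta> q"]) (rule Hws_eq[OF Fc_upd_CdP]; simp)

lemma pdj_HJ_CdP: "pdj (HJ \<theta> Jx) q (CdP j k) = 0"
  by (rule pdj_const_upd[of _ _ _ "HJ \<theta> Jx q"]) (simp add: HJ_def Fc_def)

lemma pdj_Hws_antisym:
  assumes i0: "i \<noteq> 0" and j0: "j \<noteq> 0"
    and d: "((\<lambda>t. Hws \<theta> (q(CdA i j := t))) has_real_derivative D) (at (q (CdA i j)))"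
  shows "pdj (Hws \<theta>) q (CdA j i) = - pdj (Hws \<theta>) q (CdA i j)"
proof (cases "j = i")
  case True
  have "pdj (Hws \<theta>) q (CdA j i) = 0"
    by (rule pdj_const_upd[of _ _ _ "Hws \<theta> q"]) (rule Hws_eq, use True Fc_upd_diag i0 in auto)
  then show ?thesis using True by simp
next
  case False
  let ?c = "q (CdA i j) + q (CdA j i)"
  have eq: "(\<lambda>s. Hws \<theta> (q(CdA j i := s))) = (\<lambda>s. Hws \<theta> (q(CdA i j := ?c - s)))"
    by (rule ext, rule Hws_eq[OF Fc_upd_swap[OF False]]) (use i0 j0 in auto)
  have d1: "((\<lambda>s. ?c - s) has_real_derivative -1) (at (q (CdA j i)))"
    by (auto intro!: derivative_eq_intros)
  have d2: "((\<lambda>t. Hws \<theta> (q(CdA i j := t))) has_real_derivative D) (at (?c - q (CdA j i)))"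
    using d by simp
  have "((\<lambda>s. Hws \<theta> (q(CdA i j := ?c - s))) has_real_derivative D * -1) (at (q (CdA j i)))"
    using DERIV_chain'[OF d1 d2] by simp
  then have "pdj (Hws \<theta>) q (CdA j i) = - D"
    unfolding pdj_def eq by (simp add: DERIV_imp_deriv)
  moreover have "pdj (Hws \<theta>) q (CdA i j) = D" using d by (rule pdj_eq)
  ultimately show ?thesis by simp
qed

lemma Ham_pf: assumes "\<forall>\<mu>. smooth4 (J \<mu>)"
  shows "(\<lambda>\<epsilon> y q. Ham (scale_theta \<epsilon> \<Theta>) J y q) \<in> polyfun"
  unfolding Ham_def using pf_add[OF Hws_pf HJ_pf[OF assms]] by simp

lemma Hws_deriv: "((\<lambda>t. Hws (scale_theta \<epsilon> \<Theta>) (q(v:=t))) has_real_derivative pdj (Hws (scale_theta \<epsilon> \<Theta>)) q v) (at (q v))"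
  using pf_hasderiv[of "\<lambda>\<epsilon> y q. Hws (scale_theta \<epsilon> \<Theta>) q" \<epsilon> _ q v, OF Hws_pf] by simp

lemma HJ_deriv: assumes "\<forall>\<mu>. smooth4 (J \<mu>)"
  shows "((\<lambda>t. HJ (scale_theta \<epsilon> \<Theta>) (\<lambda>\<mu>. J \<mu> y) (q(v:=t))) has_real_derivative pdj (HJ (scale_theta \<epsilon> \<Theta>) (\<lambda>\<mu>. J \<mu> y)) q v) (at (q v))"
  using pf_hasderiv[of "\<lambda>\<epsilon> y q. HJ (scale_theta \<epsilon> \<Theta>) (\<lambda>\<mu>. J \<mu> y) q" \<epsilon> y q v, OF HJ_pf[OF assms]] by simp

lemma pdj_Ham: assumes "\<forall>\<mu>. smooth4 (J \<mu>)"
  shows "pdj (Ham (scale_theta \<epsilon> \<Theta>) J y) q v = pdj (Hws (scale_theta \<epsilon> \<Theta>)) q v + pdj (HJ (scale_theta \<epsilon> \<Theta>) (\<lambda>\<mu>. J \<mu> y)) q v"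
proof -
  have "Ham (scale_theta \<epsilon> \<Theta>) J y = (\<lambda>q. Hws (scale_theta \<epsilon> \<Theta>) q + HJ (scale_theta \<epsilon> \<Theta>) (\<lambda>\<mu>. J \<mu> y) q)"
    by (rule ext) (simp add: Ham_def)
  then show ?thesis using pdj_add[OF Hws_deriv[where \<epsilon>=\<epsilon> and \<Theta>=\<Theta> and q=q and v=v] HJ_deriv[OF assms, where \<epsilon>=\<epsilon> and \<Theta>=\<Theta> and y=y and q=q and v=v]] by simp
qed

lemma piF_pe: assumes sA: "\<forall>\<mu>. smooth4 (A \<mu>)" and sJ: "\<forall>\<mu>. smooth4 (J \<mu>)"
  shows "(\<lambda>\<epsilon> y. piF (scale_theta \<epsilon> \<Theta>) A J i y) \<in> polyeps"
proof (cases "i = 0")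
  case True then show ?thesis by (simp add: piF_def pe_cnst)
next
  case False
  then show ?thesis unfolding piF_def Ffup_def Ff_def scale_theta_def
    by (simp only: if_False) (intro pe_add pe_mult pe_diff pe_sum pe_eps pe_cnst pe_const finite sA[rule_format] sJ[rule_format] smooth4_pdx)
qed

lemma cjet_pe: assumes sA: "\<forall>\<mu>. smooth4 (A \<mu>)" and sJ: "\<forall>\<mu>. smooth4 (J \<mu>)"
  shows "(\<lambda>\<epsilon> y. cjet (scale_theta \<epsilon> \<Theta>) A J y v) \<in> polyeps"
proof (cases v)
  case (CA \<mu>) then show ?thesis using sA by (simp add: cjet_def pe_const)
next
  case (CdA j \<mu>) then show ?thesis using sA by (simp add: cjet_def pe_const smooth4_pdx)
next
  case (CP \<mu>) then show ?thesis using piF_pe[OF sA sJ] by (simp add: cjet_def)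
next
  case (CdP j \<mu>) then show ?thesis using pe_pdx[OF piF_pe[OF sA sJ]] by (simp add: cjet_def)
qed

lemma Hws_smooth: assumes "\<forall>\<mu>. smooth4 (A \<mu>)" "\<forall>\<mu>. smooth4 (J \<mu>)"
  shows "smooth4 (\<lambda>y. pdj (Hws (scale_theta \<epsilon> \<Theta>)) (cjet (scale_theta \<epsilon> \<Theta>) A J y) v)"
  using pe_smooth[OF pf_pdj_pe[of "\<lambda>\<epsilon> y q. Hws (scale_theta \<epsilon> \<Theta>) q" "\<lambda>\<epsilon> y. cjet (scale_theta \<epsilon> \<Theta>) A J y" v, OF Hws_pf cjet_pe[OF assms]], of \<epsilon>] by simp

lemma HJ_pe: assumes "\<forall>\<mu>. smooth4 (A \<mu>)" "\<forall>\<mu>. smooth4 (J \<mu>)"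
  shows "(\<lambda>\<epsilon> y. pdj (HJ (scale_theta \<epsilon> \<Theta>) (\<lambda>\<mu>. J \<mu> y)) (cjet (scale_theta \<epsilon> \<Theta>) A J y) v) \<in> polyeps"
  using pf_pdj_pe[of "\<lambda>\<epsilon> y q. HJ (scale_theta \<epsilon> \<Theta>) (\<lambda>\<mu>. J \<mu> y) q" "\<lambda>\<epsilon> y. cjet (scale_theta \<epsilon> \<Theta>) A J y" v, OF HJ_pf[OF assms(2)] cjet_pe[OF assms]] by simp

lemma Ham_pe: assumes "\<forall>\<mu>. smooth4 (A \<mu>)" "\<forall>\<mu>. smooth4 (J \<mu>)"
  shows "(\<lambda>\<epsilon> y. pdj (Ham (scale_theta \<epsilon> \<Theta>) J y) (cjet (scale_theta \<epsilon> \<Theta>) A J y) v) \<in> polyeps"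
  using pf_pdj_pe[of "\<lambda>\<epsilon> y q. Ham (scale_theta \<epsilon> \<Theta>) J y q" "\<lambda>\<epsilon> y. cjet (scale_theta \<epsilon> \<Theta>) A J y" v, OF Ham_pf[OF assms(2)] cjet_pe[OF assms]] by simp




lemma spat_cases: "i \<in> spat \<Longrightarrow> i = 1 \<or> i = 2 \<or> i = (3::4)"
  by (simp add: spat_eq)

lemma pdj_phi2: "pdj (phi2 \<theta> J x) q v = (\<Sum>i\<in>spat. if CdP i i = v then 1 else 0)
   + 1/2 * (\<Sum>k\<in>spat. \<Sum>l\<in>spat. \<theta> k l * ((if CdA l k = v then 1 else 0) * J 0 x + (if CA k = v then 1 else 0) * pdx l (J 0) x))"
proof -
  have "((\<lambda>t. phi2 \<theta> J x (q(v:=t))) has_real_derivative (\<Sum>i\<in>spat. if CdP i i = v then 1 else 0)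
   + 1/2 * (\<Sum>k\<in>spat. \<Sum>l\<in>spat. \<theta> k l * ((if CdA l k = v then 1 else 0) * J 0 x + (if CA k = v then 1 else 0) * pdx l (J 0) x))) (at (q v))"
    unfolding phi2_def
    apply (rule DERIV_cong)
     apply (rule derivative_intros DERIV_upd)+
    apply (simp add: algebra_simps)
    done
  then show ?thesis by (rule pdj_eq)
qed

lemma pdj_HJ_CA: assumes "i \<in> spat"
  shows "pdj (HJ \<theta> Jx) q (CA i) = Jx i + 1/2 * (\<Sum>l\<in>spat. \<theta> i l * (Jx 0 * q (CdA l 0)
     + (\<Sum>k\<in>spat. Jx k * q (CdA l k)) + Jx 0 * eta 0 0 * (\<Sum>m\<in>spat. eta l m * q (CP m))
     - (\<Sum>k\<in>spat. Fc q k l * Jx k)))"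
proof -
  have "((\<lambda>t. HJ \<theta> Jx (q(CA i:=t))) has_real_derivative Jx i + 1/2 * (\<Sum>l\<in>spat. \<theta> i l * (Jx 0 * q (CdA l 0)
     + (\<Sum>k\<in>spat. Jx k * q (CdA l k)) + Jx 0 * eta 0 0 * (\<Sum>m\<in>spat. eta l m * q (CP m))
     - (\<Sum>k\<in>spat. Fc q k l * Jx k)))) (at (q (CA i)))"
    unfolding HJ_def Fc_def
    apply (rule DERIV_cong)
     apply (rule derivative_intros DERIV_upd)+
    using spat_cases[OF assms] apply (elim disjE)
    apply (simp_all add: sum_spat eta_def Fc_def algebra_simps)
    done
  then show ?thesis by (rule pdj_eq)
qed

lemma pdj_HJ_CdA: assumes "i \<in> spat" "j \<in> spat"
  shows "pdj (HJ \<theta> Jx) q (CdA j i) = (\<Sum>m\<in>spat. \<theta> m j * q (CA m)) * Jx i - 1/2 * (\<Sum>m\<in>spat. \<theta> m i * q (CA m)) * Jx j"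
proof -
  have "((\<lambda>t. HJ \<theta> Jx (q(CdA j i:=t))) has_real_derivative
     (\<Sum>m\<in>spat. \<theta> m j * q (CA m)) * Jx i - 1/2 * (\<Sum>m\<in>spat. \<theta> m i * q (CA m)) * Jx j) (at (q (CdA j i)))"
    unfolding HJ_def Fc_def
    apply (rule DERIV_cong)
     apply (rule derivative_intros DERIV_upd)+
    using spat_cases[OF assms(1)] spat_cases[OF assms(2)] apply (elim disjE)
    apply (simp_all add: sum_spat eta_def Fc_def algebra_simps)
    done
  then show ?thesis by (rule pdj_eq)
qed

lemma piF0: assumes "m \<in> spat"
  shows "piF (scale_theta 0 \<Theta>) A J m y = pdx 0 (A m) y - pdx m (A 0) y"
  using spat_cases[OF assms] spat_eq
  by (elim disjE) (simp_all add: piF_def Ffup_def Ff_def scale_theta_def sum_UNIV4 eta_def)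

lemma pdj_Ham0_CP: assumes "k \<in> spat"
  shows "pdj (Ham (scale_theta 0 \<Theta>) J y) q (CP k) = q (CdA k 0) + q (CP k)"
proof -
  have "((\<lambda>t. Ham (scale_theta 0 \<Theta>) J y (q(CP k:=t))) has_real_derivative q (CdA k 0) + q (CP k)) (at (q (CP k)))"
    unfolding Ham_def Hws_def HJ_def scale_theta_def Fcup_def Fc_def
    apply (rule DERIV_cong)
     apply (rule derivative_intros DERIV_upd)+
    using spat_cases[OF assms] apply (elim disjE)
    apply (simp_all add: sum_spat eta_def Fc_def Fcup_def)
    done
  then show ?thesis by (rule pdj_eq)
qed




lemma dHdP_split:
  assumes sA: "\<forall>\<mu>. smooth4 (A \<mu>)" and sJ: "\<forall>\<mu>. smooth4 (J \<mu>)" and k: "k \<in> spat"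
  shows "\<exists>G\<in>polyeps. \<forall>\<epsilon> y. dHdP (scale_theta \<epsilon> \<Theta>) A J k y = pdx 0 (A k) y + \<epsilon> * G \<epsilon> y"
proof -
  let ?D = "\<lambda>\<epsilon> y. pdj (Ham (scale_theta \<epsilon> \<Theta>) J y) (cjet (scale_theta \<epsilon> \<Theta>) A J y) (CP k)"
  have D: "?D \<in> polyeps" by (rule Ham_pe[OF sA sJ])
  have eq: "dHdP (scale_theta \<epsilon> \<Theta>) A J k y = ?D \<epsilon> y" for \<epsilon> y
  proof -
    have "(\<lambda>y. pdj (Ham (scale_theta \<epsilon> \<Theta>) J y) (cjet (scale_theta \<epsilon> \<Theta>) A J y) (CdP j k)) = (\<lambda>y. 0)" for j
      by (rule ext) (simp add: pdj_Ham[OF sJ] pdj_Hws_CdP pdj_HJ_CdP)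
    then show ?thesis unfolding dHdP_def by (simp add: pdx_const)
  qed
  have D0: "?D 0 y = pdx 0 (A k) y" for y
    using pdj_Ham0_CP[OF k, of \<Theta> J y] piF0[OF k, of \<Theta> A J y] by (simp add: cjet_def)
  obtain G where G: "G \<in> polyeps" "\<forall>\<epsilon> y. ?D \<epsilon> y = ?D 0 y + \<epsilon> * G \<epsilon> y"
    using pe_split[OF D] by blast
  show ?thesis
    by (rule bexI[OF _ G(1)]) (use G(2) eq D0 in simp)
qed

lemma dHdA_sum:
  assumes sA: "\<forall>\<mu>. smooth4 (A \<mu>)" and sJ: "\<forall>\<mu>. smooth4 (J \<mu>)"
  shows "(\<Sum>i\<in>spat. pdx i (dHdA (scale_theta \<epsilon> \<Theta>) A J i) x) =
     (\<Sum>i\<in>spat. pdx i (\<lambda>y. pdj (HJ (scale_theta \<epsilon> \<Theta>) (\<lambda>\<mu>. J \<mu> y)) (cjet (scale_theta \<epsilon> \<Theta>) A J y) (CA i)) x)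
   - (\<Sum>i\<in>spat. \<Sum>j\<in>spat. pdx i (pdx j (\<lambda>y. pdj (HJ (scale_theta \<epsilon> \<Theta>) (\<lambda>\<mu>. J \<mu> y)) (cjet (scale_theta \<epsilon> \<Theta>) A J y) (CdA j i))) x)"
proof -
  let ?W = "\<lambda>j i y. pdj (Hws (scale_theta \<epsilon> \<Theta>)) (cjet (scale_theta \<epsilon> \<Theta>) A J y) (CdA j i)"
  let ?G = "\<lambda>j i y. pdj (HJ (scale_theta \<epsilon> \<Theta>) (\<lambda>\<mu>. J \<mu> y)) (cjet (scale_theta \<epsilon> \<Theta>) A J y) (CdA j i)"
  let ?P = "\<lambda>i y. pdj (HJ (scale_theta \<epsilon> \<Theta>) (\<lambda>\<mu>. J \<mu> y)) (cjet (scale_theta \<epsilon> \<Theta>) A J y) (CA i)"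
  have sW: "smooth4 (?W j i)" for j i by (rule Hws_smooth[OF sA sJ])
  have sG: "smooth4 (?G j i)" for j i using pe_smooth[OF HJ_pe[OF sA sJ]] by simp
  have sP: "smooth4 (?P i)" for i using pe_smooth[OF HJ_pe[OF sA sJ]] by simp
  have aW: "?W j i y = - ?W i j y" if "j \<in> spat" "i \<in> spat" for j i y
    by (rule pdj_Hws_antisym[OF _ _ Hws_deriv]) (use that in \<open>auto simp: spat_def\<close>)
  have EB: "dHdA (scale_theta \<epsilon> \<Theta>) A J i = (\<lambda>y. ?P i y - (\<Sum>j\<in>spat. pdx j (?W j i) y + pdx j (?G j i) y))" for i
  proof (rule ext)
    fix y
    show "dHdA (scale_theta \<epsilon> \<Theta>) A J i y = ?P i y - (\<Sum>j\<in>spat. pdx j (?W j i) y + pdx j (?G j i) y)"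
      unfolding dHdA_def pdj_Ham[OF sJ] pdj_Hws_CA pdx_addf[OF sW sG] by simp
  qed
  have sPW: "smooth4 (pdx j (?W j i))" "smooth4 (pdx j (?G j i))" for j i
    using sW sG by (auto intro: smooth4_pdx)
  have sS: "smooth4 (\<lambda>y. \<Sum>j\<in>spat. pdx j (?W j i) y + pdx j (?G j i) y)" for i
    by (intro smooth4_sum smooth4_add sPW finite)
  have "pdx i (dHdA (scale_theta \<epsilon> \<Theta>) A J i) x = pdx i (?P i) x
     - ((\<Sum>j\<in>spat. pdx i (pdx j (?W j i)) x) + (\<Sum>j\<in>spat. pdx i (pdx j (?G j i)) x))" for i
    unfolding EB pdx_difff[OF sP sS] pdx_sumf[OF finite smooth4_add[OF sPW]] pdx_addf[OF sPW]
    by (simp add: sum.distrib)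
  then have "(\<Sum>i\<in>spat. pdx i (dHdA (scale_theta \<epsilon> \<Theta>) A J i) x) = (\<Sum>i\<in>spat. pdx i (?P i) x)
     - (\<Sum>i\<in>spat. \<Sum>j\<in>spat. pdx i (pdx j (?W j i)) x) - (\<Sum>i\<in>spat. \<Sum>j\<in>spat. pdx i (pdx j (?G j i)) x)"
    by (simp add: sum_subtractf sum.distrib)
  moreover have "(\<Sum>i\<in>spat. \<Sum>j\<in>spat. pdx i (pdx j (?W j i)) x) = 0"
    by (rule double_antisym_zero_on[OF sW aW])
  ultimately show ?thesis by simp
qed

lemma PB_struct:
  "PB_phi2_H \<theta> A J x = (\<Sum>k\<in>spat. (1/2 * (\<Sum>l\<in>spat. \<theta> k l * pdx l (J 0) x)) * dHdP \<theta> A J k x)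
     + (\<Sum>j\<in>spat. \<Sum>k\<in>spat. (1/2 * \<theta> k j * J 0 x) * pdx j (dHdP \<theta> A J k) x)
     - (\<Sum>i\<in>spat. pdx i (dHdA \<theta> A J i) x)"
  unfolding PB_phi2_H_def pdj_phi2
  by (simp add: sum_UNIV4 sum_spat algebra_simps)




definition T0f :: "(4 \<Rightarrow> 4 \<Rightarrow> real) \<Rightarrow> (4 \<Rightarrow> real^4 \<Rightarrow> real) \<Rightarrow> (4 \<Rightarrow> real^4 \<Rightarrow> real) \<Rightarrow> 4 \<Rightarrow> real^4 \<Rightarrow> real" where
  "T0f \<Theta> A J i y = 1/2 * (\<Sum>l\<in>spat. \<Theta> i l * (J 0 y * pdx l (A 0) y + (\<Sum>k\<in>spat. J k y * pdx l (A k) y)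
      + J 0 y * eta 0 0 * (\<Sum>m\<in>spat. eta l m * (pdx 0 (A m) y - pdx m (A 0) y))
      - (\<Sum>k\<in>spat. (pdx k (A l) y - pdx l (A k) y) * J k y)))"

definition HDf :: "(4 \<Rightarrow> 4 \<Rightarrow> real) \<Rightarrow> (4 \<Rightarrow> real^4 \<Rightarrow> real) \<Rightarrow> (4 \<Rightarrow> real^4 \<Rightarrow> real) \<Rightarrow> 4 \<Rightarrow> 4 \<Rightarrow> real^4 \<Rightarrow> real" where
  "HDf \<theta> A J j i y = (\<Sum>m\<in>spat. \<theta> m j * A m y) * J i y - 1/2 * (\<Sum>m\<in>spat. \<theta> m i * A m y) * J j y"

lemma phi2_val:
  assumes antisym: "\<forall>\<mu> \<nu>. \<Theta> \<mu> \<nu> = - \<Theta> \<nu> \<mu>" and no_time: "\<forall>i. \<Theta> 0 i = 0"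
    and sA: "\<forall>\<mu>. smooth4 (A \<mu>)" and sJ: "\<forall>\<mu>. smooth4 (J \<mu>)"
  shows "(\<Sum>k\<in>spat. (1/2 * (\<Sum>l\<in>spat. scale_theta \<epsilon> \<Theta> k l * pdx l (J 0) x)) * pdx 0 (A k) x)
     + (\<Sum>j\<in>spat. \<Sum>k\<in>spat. (1/2 * scale_theta \<epsilon> \<Theta> k j * J 0 x) * pdx j (pdx 0 (A k)) x)
     - (\<Sum>i\<in>spat. pdx i (J i) x + \<epsilon> * pdx i (T0f \<Theta> A J i) x)
     + (\<Sum>i\<in>spat. \<Sum>j\<in>spat. pdx i (pdx j (HDf (scale_theta \<epsilon> \<Theta>) A J j i)) x)
     + phi2_expl (scale_theta \<epsilon> \<Theta>) A J x
     = Phi3cand (scale_theta \<epsilon> \<Theta>) A J x"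
  unfolding T0f_def HDf_def phi2_expl_def Phi3cand_def divJ_def
  apply (simp add: sum_UNIV4 sum_spat scale_theta_def Theta_rules[OF antisym no_time] eta_def
      sA[rule_format] sJ[rule_format] pdx_rules sm_rules cl_rules)
  apply (simp add: field_simps)
  done

definition Tf :: "(4 \<Rightarrow> 4 \<Rightarrow> real) \<Rightarrow> (4 \<Rightarrow> real^4 \<Rightarrow> real) \<Rightarrow> (4 \<Rightarrow> real^4 \<Rightarrow> real) \<Rightarrow> 4 \<Rightarrow> real \<Rightarrow> real^4 \<Rightarrow> real" where
  "Tf \<Theta> A J i \<epsilon> y = 1/2 * (\<Sum>l\<in>spat. \<Theta> i l * (J 0 y * pdx l (A 0) y + (\<Sum>k\<in>spat. J k y * pdx l (A k) y)
      + J 0 y * eta 0 0 * (\<Sum>m\<in>spat. eta l m * piF (scale_theta \<epsilon> \<Theta>) A J m y)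
      - (\<Sum>k\<in>spat. (pdx k (A l) y - pdx l (A k) y) * J k y)))"

lemma HA_formula: assumes "i \<in> spat"
  shows "pdj (HJ (scale_theta \<epsilon> \<Theta>) (\<lambda>\<mu>. J \<mu> y)) (cjet (scale_theta \<epsilon> \<Theta>) A J y) (CA i) = J i y + \<epsilon> * Tf \<Theta> A J i \<epsilon> y"
  unfolding pdj_HJ_CA[OF assms] Tf_def
  by (simp add: cjet_def Fc_def scale_theta_def sum_spat algebra_simps)

lemma HD_formula: assumes "i \<in> spat" "j \<in> spat"
  shows "pdj (HJ (scale_theta \<epsilon> \<Theta>) (\<lambda>\<mu>. J \<mu> y)) (cjet (scale_theta \<epsilon> \<Theta>) A J y) (CdA j i) = HDf (scale_theta \<epsilon> \<Theta>) A J j i y"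
  unfolding pdj_HJ_CdA[OF assms] HDf_def by (simp add: cjet_def)

lemma Tf_pe: assumes sA: "\<forall>\<mu>. smooth4 (A \<mu>)" and sJ: "\<forall>\<mu>. smooth4 (J \<mu>)"
  shows "(\<lambda>\<epsilon> y. Tf \<Theta> A J i \<epsilon> y) \<in> polyeps"
  unfolding Tf_def
  by (intro pe_add pe_mult pe_diff pe_sum pe_cnst pe_const finite piF_pe sA sJ sA[rule_format] sJ[rule_format] smooth4_pdx)

lemma Tf0: "Tf \<Theta> A J i 0 y = T0f \<Theta> A J i y"
  unfolding Tf_def T0f_def
  by (intro arg_cong[where f="\<lambda>z. 1/2 * z"] sum.cong refl arg_cong2[where f="(-)"] arg_cong2[where f="(+)"]
      arg_cong2[where f="(*)"]) (simp add: piF0)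

lemma T0f_smooth: assumes sA: "\<forall>\<mu>. smooth4 (A \<mu>)" and sJ: "\<forall>\<mu>. smooth4 (J \<mu>)"
  shows "smooth4 (T0f \<Theta> A J i)"
proof -
  have "smooth4 (\<lambda>y. T0f \<Theta> A J i y)" unfolding T0f_def
    by (intro sm_rules smooth4_sum smooth4_cmult finite sA[rule_format] sJ[rule_format])
  then show ?thesis by simp
qed

lemma HDf_smooth: assumes sA: "\<forall>\<mu>. smooth4 (A \<mu>)" and sJ: "\<forall>\<mu>. smooth4 (J \<mu>)"
  shows "smooth4 (HDf \<theta> A J j i)"
proof -
  have "smooth4 (\<lambda>y. HDf \<theta> A J j i y)" unfolding HDf_def
    by (intro sm_rules smooth4_sum smooth4_cmult finite sA[rule_format] sJ[rule_format])
  then show ?thesis by simp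
qed




lemma phi2_main:
  assumes antisym: "\<forall>\<mu> \<nu>. \<Theta> \<mu> \<nu> = - \<Theta> \<nu> \<mu>" and no_time: "\<forall>i. \<Theta> 0 i = 0"
    and sA: "\<forall>\<mu>. smooth4 (A \<mu>)" and sJ: "\<forall>\<mu>. smooth4 (J \<mu>)"
  shows "\<exists>R. isCont R 0 \<and> (\<forall>\<epsilon>. phi2_dot (scale_theta \<epsilon> \<Theta>) A J x = Phi3cand (scale_theta \<epsilon> \<Theta>) A J x + \<epsilon>\<^sup>2 * R \<epsilon>)"
proof -
  have "\<forall>k\<in>spat. \<exists>G. G \<in> polyeps \<and> (\<forall>\<epsilon> y. dHdP (scale_theta \<epsilon> \<Theta>) A J k y = pdx 0 (A k) y + \<epsilon> * G \<epsilon> y)"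
    using dHdP_split[OF sA sJ] by blast
  then obtain G where G: "\<And>k. k \<in> spat \<Longrightarrow> G k \<in> polyeps"
    "\<And>k \<epsilon> y. k \<in> spat \<Longrightarrow> dHdP (scale_theta \<epsilon> \<Theta>) A J k y = pdx 0 (A k) y + \<epsilon> * G k \<epsilon> y"
    by metis
  have "\<forall>i. \<exists>T. T \<in> polyeps \<and> (\<forall>\<epsilon> y. Tf \<Theta> A J i \<epsilon> y = Tf \<Theta> A J i 0 y + \<epsilon> * T \<epsilon> y)"
    using pe_split[OF Tf_pe[OF sA sJ]] by blast
  then obtain T1 where T1: "\<And>i. T1 i \<in> polyeps"
    "\<And>i \<epsilon> y. Tf \<Theta> A J i \<epsilon> y = T0f \<Theta> A J i y + \<epsilon> * T1 i \<epsilon> y"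
    using Tf0 by metis
  define R where "R \<epsilon> = (\<Sum>k\<in>spat. (1/2 * (\<Sum>l\<in>spat. \<Theta> k l * pdx l (J 0) x)) * G k \<epsilon> x)
     + (\<Sum>j\<in>spat. \<Sum>k\<in>spat. (1/2 * \<Theta> k j * J 0 x) * pdx j (G k \<epsilon>) x)
     - (\<Sum>i\<in>spat. pdx i (T1 i \<epsilon>) x)" for \<epsilon>
  have cG: "isCont (\<lambda>\<epsilon>. G k \<epsilon> x) 0" "isCont (\<lambda>\<epsilon>. pdx j (G k \<epsilon>) x) 0" if "k \<in> spat" for k j
    using pe_cont[OF G(1)[OF that]] pe_cont[OF pe_pdx[OF G(1)[OF that]]] by auto
  have cT: "isCont (\<lambda>\<epsilon>. pdx i (T1 i \<epsilon>) x) 0" for i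
    using pe_cont[OF pe_pdx[OF T1(1)]] by auto
  have cR: "isCont R 0"
    unfolding R_def[abs_def] by (intro continuous_intros cG cT) auto
  have sG: "smooth4 (G k \<epsilon>)" if "k \<in> spat" for k \<epsilon> using pe_smooth[OF G(1)[OF that]] .
  have sT1: "smooth4 (T1 i \<epsilon>)" for i \<epsilon> using pe_smooth[OF T1(1)] .
  have sT0: "smooth4 (T0f \<Theta> A J i)" for i by (rule T0f_smooth[OF sA sJ])
  have sHD: "smooth4 (HDf \<theta> A J j i)" for \<theta> j i by (rule HDf_smooth[OF sA sJ])
  have eq: "phi2_dot (scale_theta \<epsilon> \<Theta>) A J x = Phi3cand (scale_theta \<epsilon> \<Theta>) A J x + \<epsilon>\<^sup>2 * R \<epsilon>" for \<epsilon>
  proof -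
    let ?th = "scale_theta \<epsilon> \<Theta>"
    have dP: "dHdP ?th A J k = (\<lambda>y. pdx 0 (A k) y + \<epsilon> * G k \<epsilon> y)" if "k \<in> spat" for k
      using G(2)[OF that] by (intro ext) simp
    have dPx: "pdx j (dHdP ?th A J k) x = pdx j (pdx 0 (A k)) x + \<epsilon> * pdx j (G k \<epsilon>) x" if "k \<in> spat" for j k
      unfolding dP[OF that] pdx_addf[OF smooth4_pdx[OF sA[rule_format]] smooth4_cmult[OF sG[OF that]]]
        pdx_cmultf[OF sG[OF that]] by simp
    have HA: "(\<lambda>y. pdj (HJ ?th (\<lambda>\<mu>. J \<mu> y)) (cjet ?th A J y) (CA i)) = (\<lambda>y. J i y + \<epsilon> * (T0f \<Theta> A J i y + \<epsilon> * T1 i \<epsilon> y))"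
      if "i \<in> spat" for i
      using HA_formula[OF that] T1(2) by (intro ext) simp
    have HAx: "pdx i (\<lambda>y. J i y + \<epsilon> * (T0f \<Theta> A J i y + \<epsilon> * T1 i \<epsilon> y)) x
        = pdx i (J i) x + \<epsilon> * pdx i (T0f \<Theta> A J i) x + \<epsilon>\<^sup>2 * pdx i (T1 i \<epsilon>) x" for i
    proof -
      have s1: "smooth4 (\<lambda>y. T0f \<Theta> A J i y + \<epsilon> * T1 i \<epsilon> y)" using sT0 sT1 by (intro sm_rules smooth4_cmult) auto
      show ?thesis
        unfolding pdx_addf[OF sJ[rule_format] smooth4_cmult[OF s1]] pdx_cmultf[OF s1]
          pdx_addf[OF sT0[unfolded eta_def] smooth4_cmult[OF sT1]] pdx_cmultf[OF sT1]
        by (simp add: algebra_simps power2_eq_square)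
    qed
    have HD: "(\<lambda>y. pdj (HJ ?th (\<lambda>\<mu>. J \<mu> y)) (cjet ?th A J y) (CdA j i)) = HDf ?th A J j i"
      if "i \<in> spat" "j \<in> spat" for i j
      using HD_formula[OF that] by (intro ext) simp
    have dA: "(\<Sum>i\<in>spat. pdx i (dHdA ?th A J i) x) =
        (\<Sum>i\<in>spat. pdx i (J i) x + \<epsilon> * pdx i (T0f \<Theta> A J i) x + \<epsilon>\<^sup>2 * pdx i (T1 i \<epsilon>) x)
      - (\<Sum>i\<in>spat. \<Sum>j\<in>spat. pdx i (pdx j (HDf ?th A J j i)) x)"
      unfolding dHdA_sum[OF sA sJ]
      by (intro arg_cong2[where f="(-)"] sum.cong refl) (simp_all add: HA HAx HD)
    have PB: "PB_phi2_H ?th A J x =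
        (\<Sum>k\<in>spat. (1/2 * (\<Sum>l\<in>spat. ?th k l * pdx l (J 0) x)) * (pdx 0 (A k) x + \<epsilon> * G k \<epsilon> x))
      + (\<Sum>j\<in>spat. \<Sum>k\<in>spat. (1/2 * ?th k j * J 0 x) * (pdx j (pdx 0 (A k)) x + \<epsilon> * pdx j (G k \<epsilon>) x))
      - ((\<Sum>i\<in>spat. pdx i (J i) x + \<epsilon> * pdx i (T0f \<Theta> A J i) x + \<epsilon>\<^sup>2 * pdx i (T1 i \<epsilon>) x)
      - (\<Sum>i\<in>spat. \<Sum>j\<in>spat. pdx i (pdx j (HDf ?th A J j i)) x))"
      unfolding PB_struct dA
      by (intro arg_cong2[where f="(-)"] arg_cong2[where f="(+)"] sum.cong refl) (simp_all add: G(2) dPx)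
    show ?thesis
      unfolding phi2_dot_def PB phi2_val[OF antisym no_time sA sJ, of \<epsilon> x, symmetric] R_def
      by (simp add: sum_spat scale_theta_def field_simps power2_eq_square)
  qed
  show ?thesis using cR eq by blast
qed




lemma O2_lemma:
  assumes "isCont R 0"
  shows "(\<lambda>\<epsilon>::real. \<epsilon>\<^sup>2 * R \<epsilon>) \<in> O[at 0](\<lambda>\<epsilon>. \<epsilon>\<^sup>2)"
proof -
  have "(R \<longlongrightarrow> R 0) (at 0)" using assms by (simp add: isCont_def)
  then have "eventually (\<lambda>\<epsilon>. dist (R \<epsilon>) (R 0) < 1) (at 0)" by (rule tendstoD) simp
  then have "eventually (\<lambda>\<epsilon>. norm (\<epsilon>\<^sup>2 * R \<epsilon>) \<le> (\<bar>R 0\<bar> + 1) * norm (\<epsilon>\<^sup>2)) (at 0)"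
  proof (rule eventually_mono)
    fix \<epsilon> :: real assume "dist (R \<epsilon>) (R 0) < 1"
    then have "\<bar>R \<epsilon>\<bar> \<le> \<bar>R 0\<bar> + 1" by (simp add: dist_real_def)
    then have "\<epsilon>\<^sup>2 * \<bar>R \<epsilon>\<bar> \<le> \<epsilon>\<^sup>2 * (\<bar>R 0\<bar> + 1)" by (intro mult_left_mono) auto
    then show "norm (\<epsilon>\<^sup>2 * R \<epsilon>) \<le> (\<bar>R 0\<bar> + 1) * norm (\<epsilon>\<^sup>2)" by (simp add: abs_mult mult.commute)
  qed
  then show ?thesis by (intro bigoI)
qed

theorem proposition1:
  fixes \<Theta> :: "4 \<Rightarrow> 4 \<Rightarrow> real"
    and A J :: "4 \<Rightarrow> real^4 \<Rightarrow> real"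
    and x :: "real^4"
  assumes antisym: "\<forall>\<mu> \<nu>. \<Theta> \<mu> \<nu> = - \<Theta> \<nu> \<mu>"
    and no_time: "\<forall>i. \<Theta> 0 i = 0"
    and smoothA: "\<forall>\<mu>. smooth4 (A \<mu>)"
    and smoothJ: "\<forall>\<mu>. smooth4 (J \<mu>)"
  shows "(\<lambda>\<epsilon>. divEB (scale_theta \<epsilon> \<Theta>) A J x - phi2_dot (scale_theta \<epsilon> \<Theta>) A J x)
           \<in> O[at 0](\<lambda>\<epsilon>. \<epsilon>^2)
       \<and> (\<lambda>\<epsilon>. phi2_dot (scale_theta \<epsilon> \<Theta>) A J x - Phi3cand (scale_theta \<epsilon> \<Theta>) A J x)
           \<in> O[at 0](\<lambda>\<epsilon>. \<epsilon>^2)"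
proof -
  obtain R where cR: "isCont R 0" and eq: "\<And>\<epsilon>. phi2_dot (scale_theta \<epsilon> \<Theta>) A J x = Phi3cand (scale_theta \<epsilon> \<Theta>) A J x + \<epsilon>\<^sup>2 * R \<epsilon>"
    using phi2_main[OF antisym no_time smoothA smoothJ, of x] by blast
  have dv: "divEB (scale_theta \<epsilon> \<Theta>) A J x = Phi3cand (scale_theta \<epsilon> \<Theta>) A J x" for \<epsilon>
    by (rule divEB_val[OF antisym no_time smoothA smoothJ])
  have c2: "isCont (\<lambda>\<epsilon>. - R \<epsilon>) 0" using cR by (intro continuous_intros)
  have "(\<lambda>\<epsilon>. divEB (scale_theta \<epsilon> \<Theta>) A J x - phi2_dot (scale_theta \<epsilon> \<Theta>) A J x) = (\<lambda>\<epsilon>. \<epsilon>\<^sup>2 * (- R \<epsilon>))"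
    by (rule ext) (simp add: dv eq)
  moreover have "(\<lambda>\<epsilon>. phi2_dot (scale_theta \<epsilon> \<Theta>) A J x - Phi3cand (scale_theta \<epsilon> \<Theta>) A J x) = (\<lambda>\<epsilon>. \<epsilon>\<^sup>2 * R \<epsilon>)"
    by (rule ext) (simp add: eq)
  ultimately show ?thesis using O2_lemma[OF c2] O2_lemma[OF cR] by simp
qed


end
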